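(* Let $N_t\ge 2$, $N_r\ge 1$ be integers, $\rho>0$, and let $\mathbf{h}_1,\dots,\mathbf{h}_{N_t}$ be i.i.d. $N_r\times 1$ vectors with i.i.d. $\mathcal{CN}(0,1)$ entries. Fix $k\in\{1,\dots,N_t\}$ and define $$X_{\rm MRC}=\frac{\|\mathbf{h}_k\|^2}{1+\frac{\rho}{N_t}\sum_{j\ne k}\frac{|\mathbf{h}_k^\dagger\mathbf{h}_j|^2}{\|\mathbf{h}_k\|^2}}.$$ Then for all $x\ge 0$, $$\Pr(X_{\rm MRC}\le x)=1-\frac{e^{-x}}{\left(1+\frac{\rho}{N_t}x\right)^{N_t-1}}\sum_{k'=0}^{N_r-1}\sum_{p=0}^{k'}\frac{\alpha_{p,k'}\,x^{k'}}{\left(1+\frac{\rho}{N_t}x\right)^{p}},\qquad \alpha_{p,k'}=\frac{\binom{N_t+p-2}{p}\left(\frac{\rho}{N_t}\right)^p}{(k'-p)!}.$$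
   Context: $X_{\rm MRC}$ is the normalized SINR ($N_t/\rho$ times the SINR) at the output of a maximum ratio combining receiver $\mathbf{w}=\mathbf{h}_k$ for the data stream from transmit antenna $k$, in the model $\mathbf{y}=\mathbf{H}\mathbf{x}+\mathbf{n}$ with $\mathbf{H}=[\mathbf{h}_1,\dots,\mathbf{h}_{N_t}]$, $\mathbf{n}\sim\mathcal{CN}(\mathbf{0},N_0\mathbf{I})$, independent streams each of power $P/N_t$, and $\rho=P/N_0$. *)

theory Defs
  imports "HOL-Probability.Probability"
begin

text \<open>Vectors in C^Nr are represented as functions nat => complex, only the
indices i < Nr being relevant. The channel is h w j i: entry i (0..Nr-1) of
column j (0..Nt-1) of H, at sample point w.\<close>

definition vec_norm_sq :: "nat \<Rightarrow> (nat \<Rightarrow> complex) \<Rightarrow> real" where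
  "vec_norm_sq Nr v = (\<Sum>i<Nr. (cmod (v i))^2)"

definition herm_inner :: "nat \<Rightarrow> (nat \<Rightarrow> complex) \<Rightarrow> (nat \<Rightarrow> complex) \<Rightarrow> complex" where
  "herm_inner Nr u v = (\<Sum>i<Nr. cnj (u i) * v i)"

definition X_MRC :: "nat \<Rightarrow> nat \<Rightarrow> real \<Rightarrow> nat \<Rightarrow> (nat \<Rightarrow> nat \<Rightarrow> complex) \<Rightarrow> real" where
  "X_MRC Nt Nr \<rho> k H =
     vec_norm_sq Nr (H k) /
     (1 + \<rho> / real Nt * (\<Sum>j\<in>{..<Nt} - {k}.
          (cmod (herm_inner Nr (H k) (H j)))^2 / vec_norm_sq Nr (H k)))"

text \<open>All entries h_j(i), j < Nt, i < Nr, are i.i.d. CN(0,1): their real and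
imaginary parts form a mutually independent family of real random variables,
each distributed N(0,1/2).\<close>
definition iid_CN01_entries ::
  "'a measure \<Rightarrow> nat \<Rightarrow> nat \<Rightarrow> ('a \<Rightarrow> nat \<Rightarrow> nat \<Rightarrow> complex) \<Rightarrow> bool" where
  "iid_CN01_entries M Nt Nr h \<longleftrightarrow>
     prob_space.indep_vars M (\<lambda>_. borel)
       (\<lambda>(j, i, b) w. if b then Re (h w j i) else Im (h w j i))
       ({..<Nt} \<times> {..<Nr} \<times> (UNIV :: bool set)) \<and>
     (\<forall>j<Nt. \<forall>i<Nr.
        distributed M lborel (\<lambda>w. Re (h w j i)) (normal_density 0 (1 / sqrt 2)) \<and>
        distributed M lborel (\<lambda>w. Im (h w j i)) (normal_density 0 (1 / sqrt 2)))"

definition alpha_coef :: "nat \<Rightarrow> real \<Rightarrow> nat \<Rightarrow> nat \<Rightarrow> real" where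
  "alpha_coef Nt \<rho> p k' = real ((Nt + p - 2) choose p) * (\<rho> / real Nt) ^ p / fact (k' - p)"

end

theory Submission
  imports Defs
begin

lemma emeasure_lborel_translate:
  fixes A :: "real set" assumes [measurable]: "A \<in> sets borel"
  shows "emeasure lborel {x. x + c \<in> A} = emeasure lborel A"
proof -
  have "emeasure lborel A = emeasure (distr lborel borel ((+) c)) A"
    by (simp add: lborel_distr_plus)
  also have "\<dots> = emeasure lborel ((+) c -` A \<inter> space lborel)"
    by (rule emeasure_distr) auto
  also have "(+) c -` A \<inter> space lborel = {x. x + c \<in> A}" by (auto simp: add.commute)
  finally show ?thesis by simp
qed

lemma shear1:
  "distr (lborel \<Otimes>\<^sub>M lborel) (lborel \<Otimes>\<^sub>M lborel) (\<lambda>(x,y). (x + t*y, y::real)) = (lborel \<Otimes>\<^sub>M lborel :: (real\<times>real) measure)"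
proof (rule pair_measure_eqI[symmetric])
  show "sigma_finite_measure (lborel::real measure)" by (rule lborel.sigma_finite_measure_axioms)
  show "sigma_finite_measure (lborel::real measure)" by (rule lborel.sigma_finite_measure_axioms)
  show "sets (lborel \<Otimes>\<^sub>M lborel) = sets (distr (lborel \<Otimes>\<^sub>M lborel) (lborel \<Otimes>\<^sub>M (lborel::real measure)) (\<lambda>(x,y). (x + t*y, y::real)))"
    by simp
  fix A B :: "real set" assume A': "A \<in> sets lborel" and B': "B \<in> sets lborel"
  have A[measurable]: "A \<in> sets borel" and B[measurable]: "B \<in> sets borel" using A' B' by auto
  have "emeasure (distr (lborel \<Otimes>\<^sub>M lborel) (lborel \<Otimes>\<^sub>M lborel) (\<lambda>(x,y). (x + t*y, y::real))) (A \<times> B)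
     = emeasure (lborel \<Otimes>\<^sub>M lborel) ((\<lambda>(x,y). (x + t*y, y::real)) -` (A \<times> B) \<inter> space (lborel \<Otimes>\<^sub>M lborel))"
    by (rule emeasure_distr) auto
  also have "\<dots> = \<integral>\<^sup>+ y. emeasure lborel ((\<lambda>x. (x, y)) -` ((\<lambda>(x,y). (x + t*y, y::real)) -` (A \<times> B) \<inter> space (lborel \<Otimes>\<^sub>M lborel))) \<partial>lborel"
    by (rule lborel_pair.emeasure_pair_measure_alt2) (rule measurable_sets[where A="borel \<Otimes>\<^sub>M borel"], measurable)
  also have "\<dots> = \<integral>\<^sup>+ y. emeasure lborel A * indicator B y \<partial>lborel"
  proof (rule nn_integral_cong)
    fix y :: real
    have "(\<lambda>x. (x, y)) -` ((\<lambda>(x,y). (x + t*y, y::real)) -` (A \<times> B) \<inter> space (lborel \<Otimes>\<^sub>M lborel))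
       = (if y \<in> B then {x. x + t*y \<in> A} else {})" by (auto simp: space_pair_measure)
    then show "emeasure lborel ((\<lambda>x. (x, y)) -` ((\<lambda>(x,y). (x + t*y, y::real)) -` (A \<times> B) \<inter> space (lborel \<Otimes>\<^sub>M lborel))) = emeasure lborel A * indicator B y"
      using emeasure_lborel_translate[of A "t*y"] by (simp split: split_indicator)
  qed
  also have "\<dots> = emeasure lborel A * emeasure lborel B"
    by (simp add: nn_integral_cmult_indicator)
  finally show "emeasure lborel A * emeasure lborel B = emeasure (distr (lborel \<Otimes>\<^sub>M lborel) (lborel \<Otimes>\<^sub>M lborel) (\<lambda>(x,y). (x + t*y, y::real))) (A \<times> B)" by simp
qed

lemma shear2:
  "distr (lborel \<Otimes>\<^sub>M lborel) (lborel \<Otimes>\<^sub>M lborel) (\<lambda>(x,y). (x, y + t*x::real)) = (lborel \<Otimes>\<^sub>M lborel :: (real\<times>real) measure)"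
proof (rule pair_measure_eqI[symmetric])
  show "sigma_finite_measure (lborel::real measure)" by (rule lborel.sigma_finite_measure_axioms)
  show "sigma_finite_measure (lborel::real measure)" by (rule lborel.sigma_finite_measure_axioms)
  show "sets (lborel \<Otimes>\<^sub>M lborel) = sets (distr (lborel \<Otimes>\<^sub>M lborel) (lborel \<Otimes>\<^sub>M (lborel::real measure)) (\<lambda>(x,y). (x, y + t*x::real)))"
    by simp
  fix A B :: "real set" assume A': "A \<in> sets lborel" and B': "B \<in> sets lborel"
  have A[measurable]: "A \<in> sets borel" and B[measurable]: "B \<in> sets borel" using A' B' by auto
  have "emeasure (distr (lborel \<Otimes>\<^sub>M lborel) (lborel \<Otimes>\<^sub>M lborel) (\<lambda>(x,y). (x, y + t*x::real))) (A \<times> B)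
     = emeasure (lborel \<Otimes>\<^sub>M lborel) ((\<lambda>(x,y). (x, y + t*x::real)) -` (A \<times> B) \<inter> space (lborel \<Otimes>\<^sub>M lborel))"
    by (rule emeasure_distr) auto
  also have "\<dots> = \<integral>\<^sup>+ x. emeasure lborel (Pair x -` ((\<lambda>(x,y). (x, y + t*x::real)) -` (A \<times> B) \<inter> space (lborel \<Otimes>\<^sub>M lborel))) \<partial>lborel"
    by (rule lborel.emeasure_pair_measure_alt) (rule measurable_sets[where A="borel \<Otimes>\<^sub>M borel"], measurable)
  also have "\<dots> = \<integral>\<^sup>+ x. emeasure lborel B * indicator A x \<partial>lborel"
  proof (rule nn_integral_cong)
    fix x :: real
    have "Pair x -` ((\<lambda>(x,y). (x, y + t*x::real)) -` (A \<times> B) \<inter> space (lborel \<Otimes>\<^sub>M lborel))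
       = (if x \<in> A then {y. y + t*x \<in> B} else {})" by (auto simp: space_pair_measure)
    then show "emeasure lborel (Pair x -` ((\<lambda>(x,y). (x, y + t*x::real)) -` (A \<times> B) \<inter> space (lborel \<Otimes>\<^sub>M lborel))) = emeasure lborel B * indicator A x"
      using emeasure_lborel_translate[of B "t*x"] by (simp split: split_indicator)
  qed
  also have "\<dots> = emeasure lborel A * emeasure lborel B"
    by (subst nn_integral_cmult_indicator) (auto simp: mult.commute)
  finally show "emeasure lborel A * emeasure lborel B = emeasure (distr (lborel \<Otimes>\<^sub>M lborel) (lborel \<Otimes>\<^sub>M lborel) (\<lambda>(x,y). (x, y + t*x::real))) (A \<times> B)" by simp
qed

lemma negate_pair:
  "distr (lborel \<Otimes>\<^sub>M lborel) (lborel \<Otimes>\<^sub>M lborel) (\<lambda>(x,y). (-x, -y::real)) = (lborel \<Otimes>\<^sub>M lborel :: (real\<times>real) measure)"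
proof -
  have "distr lborel borel (uminus::real\<Rightarrow>real) \<Otimes>\<^sub>M distr lborel borel (uminus::real\<Rightarrow>real) = distr (lborel \<Otimes>\<^sub>M lborel) (borel \<Otimes>\<^sub>M borel) (\<lambda>(x,y). (-x::real, -y::real))"
    by (rule pair_measure_distr) (auto simp: lborel_distr_uminus intro: lborel.sigma_finite_measure_axioms)
  moreover have "distr lborel borel (uminus::real\<Rightarrow>real) = lborel" by (rule lborel_distr_uminus)
  moreover have "distr (lborel \<Otimes>\<^sub>M lborel) (borel \<Otimes>\<^sub>M borel) (\<lambda>(x,y). (-x::real, -y::real)) = distr (lborel \<Otimes>\<^sub>M lborel) (lborel \<Otimes>\<^sub>M lborel) (\<lambda>(x,y). (-x, -y::real))"
    by (rule distr_cong) auto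
  ultimately show ?thesis by simp
qed

lemma rot_lborel:
  fixes c s :: real assumes cs: "c^2 + s^2 = 1"
  shows "distr (lborel \<Otimes>\<^sub>M lborel) (lborel \<Otimes>\<^sub>M lborel) (\<lambda>(x,y). (c*x - s*y, s*x + c*y)) = (lborel \<Otimes>\<^sub>M lborel :: (real\<times>real) measure)"
proof (cases "c = -1")
  case True
  then have "s = 0" using cs by (simp add: power2_eq_square)
  with True show ?thesis using negate_pair by simp
next
  case False
  have "1 + c \<noteq> 0" using False by linarith
  define t where "t = s / (1 + c)"
  have ts: "1 - t* s = c"
  proof -
    have "t* s = s^2/(1+c)" by (simp add: t_def power2_eq_square)
    also have "\<dots> = (1 - c^2)/(1+c)" using cs by (simp add: algebra_simps)
    also have "\<dots> = 1 - c" using \<open>1 + c \<noteq> 0\<close> by (simp add: field_simps power2_eq_square)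
    finally show ?thesis by simp
  qed
  have ts2: "-2 * t + t*t* s = -s"
  proof -
    have "-2 * t + t*t* s = -t*(1 + (1 - t* s))" by (simp add: algebra_simps)
    also have "\<dots> = -t*(1+c)" using ts by simp
    also have "\<dots> = -s" using \<open>1 + c \<noteq> 0\<close> by (simp add: t_def)
    finally show ?thesis .
  qed
  let ?L = "lborel \<Otimes>\<^sub>M lborel :: (real\<times>real) measure"
  let ?S1 = "\<lambda>(x,y). (x + (-t)*y, y::real)"
  let ?S2 = "\<lambda>(x,y). (x, y + s*x::real)"
  have m1: "?S1 \<in> measurable ?L ?L" by measurable
  have m2: "?S2 \<in> measurable ?L ?L" by measurable
  have "distr ?L ?L (?S2 \<circ> ?S1) = distr (distr ?L ?L ?S1) ?L ?S2"
    by (rule distr_distr[symmetric, OF m2 m1])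
  also have "\<dots> = ?L" using shear1[of "-t"] shear2[of s] by simp
  finally have e1: "distr ?L ?L (?S2 \<circ> ?S1) = ?L" .
  have m21: "?S2 \<circ> ?S1 \<in> measurable ?L ?L" using m1 m2 by (rule measurable_comp)
  have "distr ?L ?L (?S1 \<circ> (?S2 \<circ> ?S1)) = distr (distr ?L ?L (?S2 \<circ> ?S1)) ?L ?S1"
    by (rule distr_distr[symmetric, OF m1 m21])
  also have "\<dots> = ?L" using e1 shear1[of "-t"] by simp
  finally have e2: "distr ?L ?L (?S1 \<circ> (?S2 \<circ> ?S1)) = ?L" .
  have "?S1 \<circ> (?S2 \<circ> ?S1) = (\<lambda>(x,y). (c*x - s*y, s*x + c*y))"
  proof -
    have b1: "x - t * y - t * (y + s * (x - t * y)) = c * x - s * y" for x y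
    proof -
      have "x - t * y - t * (y + s * (x - t * y)) = (1 - t * s)*x + (-2 * t + t * t * s)*y"
        by (simp add: algebra_simps)
      then show ?thesis using ts ts2 by simp
    qed
    have b2: "y + s * (x - t * y) = s * x + c * y" for x y
    proof -
      have "y + s * (x - t * y) = s * x + (1 - t * s) * y" by (simp add: algebra_simps)
      then show ?thesis using ts by simp
    qed
    show ?thesis by (auto simp: fun_eq_iff b1[unfolded b2] b2)
  qed
  with e2 show ?thesis by simp
qed

lemma gauss_pair_density:
  assumes "0 < \<sigma>" shows "density lborel (\<lambda>x. ennreal (normal_density 0 \<sigma> x)) \<Otimes>\<^sub>M density lborel (\<lambda>x. ennreal (normal_density 0 \<sigma> x))
   = density (lborel \<Otimes>\<^sub>M lborel) (\<lambda>(x,y). ennreal (normal_density 0 \<sigma> x) * ennreal (normal_density 0 \<sigma> y))"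
proof (rule pair_measure_density)
  show "sigma_finite_measure (density lborel (\<lambda>x. ennreal (normal_density 0 \<sigma> x)))"
    using prob_space_normal_density[of \<sigma> 0] assms by (auto intro: prob_space_imp_sigma_finite)
qed (auto intro: lborel.sigma_finite_measure_axioms)

lemma gauss_rot:
  fixes c s \<sigma> :: real assumes cs: "c^2 + s^2 = 1" and sp: "0 < \<sigma>"
  defines "N \<equiv> density lborel (\<lambda>x. ennreal (normal_density 0 \<sigma> x))"
  shows "distr (N \<Otimes>\<^sub>M N) (lborel \<Otimes>\<^sub>M lborel) (\<lambda>(x,y). (c*x - s*y, s*x + c*y)) = N \<Otimes>\<^sub>M N"
proof -
  let ?L = "lborel \<Otimes>\<^sub>M lborel :: (real\<times>real) measure"
  let ?R = "\<lambda>(x,y). (c*x - s*y, s*x + c*y::real)"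
  let ?g = "\<lambda>(x,y). ennreal (normal_density 0 \<sigma> x) * ennreal (normal_density 0 \<sigma> y)"
  have NN: "N \<Otimes>\<^sub>M N = density ?L ?g" unfolding N_def by (rule gauss_pair_density[OF sp])
  have mR: "?R \<in> measurable ?L ?L" by measurable
  have mg: "?g \<in> borel_measurable ?L" by measurable
  have inv: "?g (?R p) = ?g p" for p
  proof -
    obtain x y where p: "p = (x,y)" by (cases p)
    have sq: "(c*x - s*y)^2 + (s*x + c*y)^2 = x^2 + y^2"
    proof -
      have "(c*x - s*y)^2 + (s*x + c*y)^2 = (c^2+s^2)*(x^2+y^2)" by (simp add: power2_eq_square algebra_simps)
      then show ?thesis using cs by simp
    qed
    have "normal_density 0 \<sigma> (c*x - s*y) * normal_density 0 \<sigma> (s*x + c*y) = normal_density 0 \<sigma> x * normal_density 0 \<sigma> y"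
    proof -
      have "\<And>a b. normal_density 0 \<sigma> a * normal_density 0 \<sigma> b = (1 / sqrt (2 * pi * \<sigma>\<^sup>2))^2 * exp (- (a^2 + b^2) / (2 * \<sigma>\<^sup>2))"
        by (simp add: normal_density_def power2_eq_square mult_exp_exp add_divide_distrib diff_divide_distrib)
      then show ?thesis using sq by metis
    qed
    then show ?thesis using p by (simp add: ennreal_mult'[symmetric] ennreal_mult[symmetric])
  qed
  have "distr (N \<Otimes>\<^sub>M N) ?L ?R = distr (density ?L (\<lambda>p. ?g (?R p))) ?L ?R"
    using NN inv by simp
  also have "\<dots> = density (distr ?L ?L ?R) ?g"
    by (rule density_distr[symmetric, OF mg mR])
  also have "\<dots> = density ?L ?g" using rot_lborel[OF cs] by simp
  finally show ?thesis using NN by simp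
qed


lemma distr_pair_snd':
  assumes "prob_space M" "prob_space N" shows "distr (M \<Otimes>\<^sub>M N) N snd = N"
proof (intro measure_eqI)
  interpret M: prob_space M by fact
  interpret N: prob_space N by fact
  fix A assume A: "A \<in> sets (distr (M \<Otimes>\<^sub>M N) N snd)"
  from A have "emeasure (distr (M \<Otimes>\<^sub>M N) N snd) A = emeasure (M \<Otimes>\<^sub>M N) (space M \<times> A)"
    by (auto simp add: emeasure_distr space_pair_measure dest: sets.sets_into_space intro!: arg_cong2[where f=emeasure])
  with A show "emeasure (distr (M \<Otimes>\<^sub>M N) N snd) A = emeasure N A"
    by (simp add: N.emeasure_pair_measure_Times M.emeasure_space_1)
qed simp

lemma (in prob_space) distr_borel_lborel: "distr M borel X = distr M lborel X"
  by (rule distr_cong) auto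

definition Nm :: "real \<Rightarrow> real measure" where
  "Nm \<sigma> = density lborel (\<lambda>x. ennreal (normal_density 0 \<sigma> x))"

lemma prob_space_Nm: "0 < \<sigma> \<Longrightarrow> prob_space (Nm \<sigma>)"
  unfolding Nm_def using prob_space_normal_density[of \<sigma> 0] by simp

lemma sets_Nm[simp, measurable_cong]: "sets (Nm \<sigma>) = sets borel"
  by (simp add: Nm_def)

lemma space_Nm[simp]: "space (Nm \<sigma>) = UNIV"
  by (simp add: Nm_def)

lemma (in prob_space) distributed_normal_iff:
  "distributed M lborel X (normal_density 0 \<sigma>) \<longleftrightarrow> X \<in> borel_measurable M \<and> distr M borel X = Nm \<sigma>"
  unfolding distributed_def Nm_def by (auto simp: distr_borel_lborel)

lemma (in prob_space) rot_rv:
  assumes ind: "indep_var borel P borel Q"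
    and dP: "distributed M lborel P (normal_density 0 \<sigma>)"
    and dQ: "distributed M lborel Q (normal_density 0 \<sigma>)"
    and sp: "0 < \<sigma>" and cs: "c^2 + s^2 = 1"
  shows "indep_var borel (\<lambda>w. c * P w - s * Q w) borel (\<lambda>w. s * P w + c * Q w)
     \<and> distributed M lborel (\<lambda>w. c * P w - s * Q w) (normal_density 0 \<sigma>)
     \<and> distributed M lborel (\<lambda>w. s * P w + c * Q w) (normal_density 0 \<sigma>)"
proof -
  interpret N: prob_space "Nm \<sigma>" by (rule prob_space_Nm[OF sp])
  have mP[measurable]: "P \<in> borel_measurable M" and mQ[measurable]: "Q \<in> borel_measurable M"
    using dP dQ by (auto simp: distributed_normal_iff)
  have DP: "distr M borel P = Nm \<sigma>" and DQ: "distr M borel Q = Nm \<sigma>"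
    using dP dQ by (auto simp: distributed_normal_iff)
  have J: "distr M (borel \<Otimes>\<^sub>M borel) (\<lambda>w. (P w, Q w)) = Nm \<sigma> \<Otimes>\<^sub>M Nm \<sigma>"
    using ind unfolding indep_var_distribution_eq DP DQ by simp
  let ?R = "\<lambda>(x,y). (c*x - s*y, s*x + c*y::real)"
  have mR[measurable]: "?R \<in> measurable (borel \<Otimes>\<^sub>M borel) (borel \<Otimes>\<^sub>M borel)" by measurable
  have "distr M (borel \<Otimes>\<^sub>M borel) (\<lambda>w. (c * P w - s * Q w, s * P w + c * Q w))
     = distr M (borel \<Otimes>\<^sub>M borel) (?R \<circ> (\<lambda>w. (P w, Q w)))" by (simp add: o_def)
  also have "\<dots> = distr (distr M (borel \<Otimes>\<^sub>M borel) (\<lambda>w. (P w, Q w))) (borel \<Otimes>\<^sub>M borel) ?R"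
    by (rule distr_distr[symmetric]) measurable
  also have "\<dots> = distr (Nm \<sigma> \<Otimes>\<^sub>M Nm \<sigma>) (lborel \<Otimes>\<^sub>M lborel) ?R"
    unfolding J by (rule distr_cong) auto
  also have "\<dots> = Nm \<sigma> \<Otimes>\<^sub>M Nm \<sigma>"
    unfolding Nm_def by (rule gauss_rot[OF cs sp])
  finally have J2: "distr M (borel \<Otimes>\<^sub>M borel) (\<lambda>w. (c * P w - s * Q w, s * P w + c * Q w)) = Nm \<sigma> \<Otimes>\<^sub>M Nm \<sigma>" .
  have D1: "distr M borel (\<lambda>w. c * P w - s * Q w) = Nm \<sigma>"
  proof -
    have "distr M borel (\<lambda>w. c * P w - s * Q w) = distr M borel (fst \<circ> (\<lambda>w. (c * P w - s * Q w, s * P w + c * Q w)))"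
      by (simp add: o_def)
    also have "\<dots> = distr (distr M (borel \<Otimes>\<^sub>M borel) (\<lambda>w. (c * P w - s * Q w, s * P w + c * Q w))) borel fst"
      by (rule distr_distr[symmetric]) measurable
    also have "\<dots> = distr (Nm \<sigma> \<Otimes>\<^sub>M Nm \<sigma>) (Nm \<sigma>) fst"
      unfolding J2 by (rule distr_cong) auto
    also have "\<dots> = Nm \<sigma>" by (rule N.distr_pair_fst)
    finally show ?thesis .
  qed
  have D2: "distr M borel (\<lambda>w. s * P w + c * Q w) = Nm \<sigma>"
  proof -
    have "distr M borel (\<lambda>w. s * P w + c * Q w) = distr M borel (snd \<circ> (\<lambda>w. (c * P w - s * Q w, s * P w + c * Q w)))"
      by (simp add: o_def)
    also have "\<dots> = distr (distr M (borel \<Otimes>\<^sub>M borel) (\<lambda>w. (c * P w - s * Q w, s * P w + c * Q w))) borel snd"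
      by (rule distr_distr[symmetric]) measurable
    also have "\<dots> = distr (Nm \<sigma> \<Otimes>\<^sub>M Nm \<sigma>) (Nm \<sigma>) snd"
      unfolding J2 by (rule distr_cong) auto
    also have "\<dots> = Nm \<sigma>" by (rule distr_pair_snd'[OF N.prob_space_axioms N.prob_space_axioms])
    finally show ?thesis .
  qed
  show ?thesis
    unfolding indep_var_distribution_eq distributed_normal_iff D1 D2 J2 by simp
qed


lemma borel_measurable_Complex[measurable (raw)]:
  "f \<in> borel_measurable M \<Longrightarrow> g \<in> borel_measurable M \<Longrightarrow> (\<lambda>x. Complex (f x) (g x)) \<in> borel_measurable M"
  by (simp add: borel_measurable_complex_iff)

definition (in prob_space) cgauss :: "real \<Rightarrow> ('a \<Rightarrow> complex) \<Rightarrow> bool" where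
  "cgauss \<sigma> V \<longleftrightarrow> indep_var borel (\<lambda>w. Re (V w)) borel (\<lambda>w. Im (V w))
     \<and> distributed M lborel (\<lambda>w. Re (V w)) (normal_density 0 \<sigma>)
     \<and> distributed M lborel (\<lambda>w. Im (V w)) (normal_density 0 \<sigma>)"

lemma (in prob_space) cgauss_measurable:
  assumes "cgauss \<sigma> V" shows "V \<in> borel_measurable M"
proof -
  have "(\<lambda>w. Re (V w)) \<in> borel_measurable M" "(\<lambda>w. Im (V w)) \<in> borel_measurable M"
    using assms unfolding cgauss_def distributed_def by auto
  then have "(\<lambda>w. Complex (Re (V w)) (Im (V w))) \<in> borel_measurable M" by measurable
  then show ?thesis by simp
qed

lemma (in prob_space) cgauss_mult:
  assumes V: "cgauss \<sigma> V" and sp: "0 < \<sigma>" and c: "c \<noteq> 0"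
  shows "cgauss (cmod c * \<sigma>) (\<lambda>w. c * V w)"
proof -
  let ?P = "\<lambda>w. Re (V w)" and ?Q = "\<lambda>w. Im (V w)"
  define a where "a = Re c / cmod c"
  define b where "b = Im c / cmod c"
  have cpos: "0 < cmod c" using c by simp
  have ab: "a^2 + b^2 = 1"
  proof -
    have "a^2 + b^2 = (Re c ^ 2 + Im c ^ 2) / (cmod c)^2" by (simp add: a_def b_def power_divide add_divide_distrib)
    also have "Re c ^ 2 + Im c ^ 2 = (cmod c)^2" by (simp add: cmod_power2)
    also have "(cmod c)^2 / (cmod c)^2 = 1" using cpos by simp
    finally show ?thesis .
  qed
  have R: "indep_var borel (\<lambda>w. a * ?P w - b * ?Q w) borel (\<lambda>w. b * ?P w + a * ?Q w)
     \<and> distributed M lborel (\<lambda>w. a * ?P w - b * ?Q w) (normal_density 0 \<sigma>)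
     \<and> distributed M lborel (\<lambda>w. b * ?P w + a * ?Q w) (normal_density 0 \<sigma>)"
    using V sp ab unfolding cgauss_def by (intro rot_rv) auto
  have re: "Re (c * V w) = 0 + cmod c * (a * ?P w - b * ?Q w)" for w
    using cpos by (simp add: a_def b_def field_simps)
  have im: "Im (c * V w) = 0 + cmod c * (b * ?P w + a * ?Q w)" for w
    using cpos by (simp add: a_def b_def field_simps)
  have d1: "distributed M lborel (\<lambda>w. 0 + cmod c * (a * ?P w - b * ?Q w)) (normal_density (0 + cmod c * 0) (\<bar>cmod c\<bar> * \<sigma>))"
    using R sp cpos by (intro normal_density_affine) auto
  have d2: "distributed M lborel (\<lambda>w. 0 + cmod c * (b * ?P w + a * ?Q w)) (normal_density (0 + cmod c * 0) (\<bar>cmod c\<bar> * \<sigma>))"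
    using R sp cpos by (intro normal_density_affine) auto
  have i: "indep_var borel ((\<lambda>x. 0 + cmod c * x) \<circ> (\<lambda>w. a * ?P w - b * ?Q w)) borel ((\<lambda>x. 0 + cmod c * x) \<circ> (\<lambda>w. b * ?P w + a * ?Q w))"
    using R by (intro indep_var_compose) auto
  show ?thesis unfolding cgauss_def re im
    using d1 d2 i by (simp add: o_def)
qed

lemma (in prob_space) indep4:
  fixes V1 V2 :: "'a \<Rightarrow> complex"
  assumes ind: "indep_var borel V1 borel V2"
    and i1: "indep_var borel (\<lambda>w. Re (V1 w)) borel (\<lambda>w. Im (V1 w))"
    and i2: "indep_var borel (\<lambda>w. Re (V2 w)) borel (\<lambda>w. Im (V2 w))"
  shows "indep_vars (\<lambda>_. borel) (\<lambda>i w. if i = 0 then Re (V1 w) else if i = 1 then Im (V1 w) else if i = 2 then Re (V2 w) else Im (V2 w)) {0..<4::nat}"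
proof -
  let ?W = "\<lambda>i w. if i = 0 then Re (V1 w) else if i = 1 then Im (V1 w) else if i = 2 then Re (V2 w) else Im (V2 w)"
  have m1[measurable]: "V1 \<in> borel_measurable M" and m2[measurable]: "V2 \<in> borel_measurable M"
    using ind by (auto dest: indep_var_rv1 indep_var_rv2)
  have rv: "random_variable borel (?W i)" for i by measurable
  have eq4: "{0..<4::nat} = {0,1,2,3}" by auto
  show ?thesis
  proof (subst indep_vars_finite[where E="\<lambda>_. sets borel"])
    show "\<forall>A\<in>(\<Pi> i\<in>{0..<4::nat}. sets borel). prob (\<Inter>j\<in>{0..<4}. ?W j -` A j \<inter> space M) = (\<Prod>j\<in>{0..<4}. prob (?W j -` A j \<inter> space M))"
    proof
      fix A :: "nat \<Rightarrow> real set" assume A: "A \<in> (\<Pi> i\<in>{0..<4::nat}. sets borel)"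
      then have A0[measurable]: "A 0 \<in> sets borel" and A1[measurable]: "A 1 \<in> sets borel"
        and A2[measurable]: "A 2 \<in> sets borel" and A3[measurable]: "A 3 \<in> sets borel" by auto
      define C1 where "C1 = {z. Re z \<in> A 0 \<and> Im z \<in> A 1}"
      define C2 where "C2 = {z. Re z \<in> A 2 \<and> Im z \<in> A 3}"
      have C1[measurable]: "C1 \<in> sets borel" unfolding C1_def by measurable
      have C2[measurable]: "C2 \<in> sets borel" unfolding C2_def by measurable
      have "(\<Inter>j\<in>{0..<4}. ?W j -` A j \<inter> space M) = (\<lambda>x. (V1 x, V2 x)) -` (C1 \<times> C2) \<inter> space M"
        unfolding eq4 C1_def C2_def by auto
      then have "prob (\<Inter>j\<in>{0..<4}. ?W j -` A j \<inter> space M) = prob (V1 -` C1 \<inter> space M) * prob (V2 -` C2 \<inter> space M)"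
        using indep_varD[OF ind C1 C2] by simp
      also have "prob (V1 -` C1 \<inter> space M) = prob ((\<lambda>w. Re (V1 w)) -` A 0 \<inter> space M) * prob ((\<lambda>w. Im (V1 w)) -` A 1 \<inter> space M)"
      proof -
        have "V1 -` C1 \<inter> space M = (\<lambda>x. (Re (V1 x), Im (V1 x))) -` (A 0 \<times> A 1) \<inter> space M" unfolding C1_def by auto
        then show ?thesis using indep_varD[OF i1 A0 A1] by simp
      qed
      also have "prob (V2 -` C2 \<inter> space M) = prob ((\<lambda>w. Re (V2 w)) -` A 2 \<inter> space M) * prob ((\<lambda>w. Im (V2 w)) -` A 3 \<inter> space M)"
      proof -
        have "V2 -` C2 \<inter> space M = (\<lambda>x. (Re (V2 x), Im (V2 x))) -` (A 2 \<times> A 3) \<inter> space M" unfolding C2_def by auto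
        then show ?thesis using indep_varD[OF i2 A2 A3] by simp
      qed
      finally show "prob (\<Inter>j\<in>{0..<4}. ?W j -` A j \<inter> space M) = (\<Prod>j\<in>{0..<4}. prob (?W j -` A j \<inter> space M))"
        unfolding eq4 by (simp add: mult.assoc)
    qed
  qed (auto simp: rv Int_stable_def sets.sigma_sets_eq[of borel, simplified])
qed

lemma (in prob_space) cgauss_add:
  assumes V1: "cgauss \<sigma>1 V1" and V2: "cgauss \<sigma>2 V2" and ind: "indep_var borel V1 borel V2"
    and s1: "0 < \<sigma>1" and s2: "0 < \<sigma>2"
  shows "cgauss (sqrt (\<sigma>1^2 + \<sigma>2^2)) (\<lambda>w. V1 w + V2 w)"
proof -
  let ?W = "\<lambda>i w. if i = 0 then Re (V1 w) else if i = 1 then Im (V1 w) else if i = 2 then Re (V2 w) else Im (V2 w)"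
  have I4: "indep_vars (\<lambda>_. borel) ?W {0..<4::nat}"
    using V1 V2 ind unfolding cgauss_def by (intro indep4) auto
  have "indep_var (PiM {0,2::nat} (\<lambda>_. borel)) (\<lambda>\<omega>. restrict (\<lambda>i. ?W i \<omega>) {0,2::nat}) (PiM {1,3::nat} (\<lambda>_. borel)) (\<lambda>\<omega>. restrict (\<lambda>i. ?W i \<omega>) {1,3::nat})"
    by (rule indep_var_restrict[OF I4]) auto
  then have "indep_var borel ((\<lambda>f::nat\<Rightarrow>real. f 0 + f 2) \<circ> (\<lambda>\<omega>. restrict (\<lambda>i. ?W i \<omega>) {0,2})) borel ((\<lambda>f::nat\<Rightarrow>real. f 1 + f 3) \<circ> (\<lambda>\<omega>. restrict (\<lambda>i. ?W i \<omega>) {1,3}))"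
    by (rule indep_var_compose) auto
  then have i: "indep_var borel (\<lambda>w. Re (V1 w + V2 w)) borel (\<lambda>w. Im (V1 w + V2 w))"
    by (simp add: o_def)
  have ir: "indep_var borel (Re \<circ> V1) borel (Re \<circ> V2)" and ii: "indep_var borel (Im \<circ> V1) borel (Im \<circ> V2)"
    using ind by (auto intro: indep_var_compose)
  have dr: "distributed M lborel (\<lambda>w. Re (V1 w) + Re (V2 w)) (normal_density (0 + 0) (sqrt (\<sigma>1^2 + \<sigma>2^2)))"
    using ir V1 V2 s1 s2 unfolding cgauss_def by (intro add_indep_normal) (auto simp: o_def)
  have di: "distributed M lborel (\<lambda>w. Im (V1 w) + Im (V2 w)) (normal_density (0 + 0) (sqrt (\<sigma>1^2 + \<sigma>2^2)))"
    using ii V1 V2 s1 s2 unfolding cgauss_def by (intro add_indep_normal) (auto simp: o_def)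
  show ?thesis unfolding cgauss_def using i dr di by simp
qed

lemma (in prob_space) cgauss_lincomb:
  fixes Z :: "'i \<Rightarrow> 'a \<Rightarrow> complex" and c :: "'i \<Rightarrow> complex"
  assumes fin: "finite S" and ind: "indep_vars (\<lambda>_. borel) Z S"
    and g: "\<And>i. i \<in> S \<Longrightarrow> cgauss s0 (Z i)" and s0: "0 < s0"
    and nz: "\<exists>i\<in>S. c i \<noteq> 0"
  shows "cgauss (s0 * sqrt (\<Sum>i\<in>S. (cmod (c i))^2)) (\<lambda>w. \<Sum>i\<in>S. c i * Z i w)"
proof -
  define T where "T = {i\<in>S. c i \<noteq> 0}"
  have fT: "finite T" "T \<noteq> {}" "T \<subseteq> S" using fin nz by (auto simp: T_def)
  have e1: "(\<Sum>i\<in>S. (cmod (c i))^2) = (\<Sum>i\<in>T. (cmod (c i))^2)"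
    unfolding T_def by (rule sum.mono_neutral_right) (auto simp: fin)
  have e2: "(\<lambda>w. \<Sum>i\<in>S. c i * Z i w) = (\<lambda>w. \<Sum>i\<in>T. c i * Z i w)"
    unfolding T_def by (rule ext, rule sum.mono_neutral_right) (auto simp: fin)
  have "T \<subseteq> S \<longrightarrow> (\<forall>i\<in>T. c i \<noteq> 0) \<longrightarrow> cgauss (s0 * sqrt (\<Sum>i\<in>T. (cmod (c i))^2)) (\<lambda>w. \<Sum>i\<in>T. c i * Z i w)"
    using fT(1,2)
  proof (induct T rule: finite_ne_induct)
    case (singleton i)
    show ?case
    proof (intro impI)
      assume "{i} \<subseteq> S" "\<forall>i\<in>{i}. c i \<noteq> 0"
      then have "cgauss (cmod (c i) * s0) (\<lambda>w. c i * Z i w)" using g s0 by (intro cgauss_mult) auto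
      then show "cgauss (s0 * sqrt (\<Sum>i\<in>{i}. (cmod (c i))^2)) (\<lambda>w. \<Sum>i\<in>{i}. c i * Z i w)"
        by (simp add: mult.commute)
    qed
  next
    case (insert i T)
    show ?case
    proof (intro impI)
      assume sub: "insert i T \<subseteq> S" and cz: "\<forall>j\<in>insert i T. c j \<noteq> 0"
      have c1: "cgauss (cmod (c i) * s0) (\<lambda>w. c i * Z i w)" using g s0 sub cz by (intro cgauss_mult) auto
      have c2: "cgauss (s0 * sqrt (\<Sum>i\<in>T. (cmod (c i))^2)) (\<lambda>w. \<Sum>i\<in>T. c i * Z i w)"
        using insert sub cz by auto
      have pos: "0 < (\<Sum>i\<in>T. (cmod (c i))^2)"
        using insert cz by (intro sum_pos) auto
      have "indep_var (PiM {i} (\<lambda>_. borel)) (\<lambda>\<omega>. restrict (\<lambda>i. Z i \<omega>) {i}) (PiM T (\<lambda>_. borel)) (\<lambda>\<omega>. restrict (\<lambda>i. Z i \<omega>) T)"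
        using sub insert by (intro indep_var_restrict[OF ind]) auto
      then have "indep_var borel ((\<lambda>f. c i * f i) \<circ> (\<lambda>\<omega>. restrict (\<lambda>i. Z i \<omega>) {i})) borel ((\<lambda>f. \<Sum>j\<in>T. c j * f j) \<circ> (\<lambda>\<omega>. restrict (\<lambda>i. Z i \<omega>) T))"
        by (rule indep_var_compose) auto
      then have iv: "indep_var borel (\<lambda>w. c i * Z i w) borel (\<lambda>w. \<Sum>j\<in>T. c j * Z j w)"
        by (simp add: o_def cong: sum.cong)
      have "cgauss (sqrt ((cmod (c i) * s0)^2 + (s0 * sqrt (\<Sum>i\<in>T. (cmod (c i))^2))^2)) (\<lambda>w. c i * Z i w + (\<Sum>j\<in>T. c j * Z j w))"
        using c1 c2 iv s0 pos cz by (intro cgauss_add) auto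
      moreover have "sqrt ((cmod (c i) * s0)^2 + (s0 * sqrt (\<Sum>i\<in>T. (cmod (c i))^2))^2) = s0 * sqrt (\<Sum>i\<in>insert i T. (cmod (c i))^2)"
      proof -
        have "(cmod (c i) * s0)^2 + (s0 * sqrt (\<Sum>i\<in>T. (cmod (c i))^2))^2 = s0^2 * (\<Sum>i\<in>insert i T. (cmod (c i))^2)"
          using insert pos by (simp add: power_mult_distrib algebra_simps)
        then show ?thesis using s0 by (simp add: real_sqrt_mult)
      qed
      moreover have "(\<lambda>w. c i * Z i w + (\<Sum>j\<in>T. c j * Z j w)) = (\<lambda>w. \<Sum>j\<in>insert i T. c j * Z j w)"
        using insert by simp
      ultimately show "cgauss (s0 * sqrt (\<Sum>i\<in>insert i T. (cmod (c i))^2)) (\<lambda>w. \<Sum>j\<in>insert i T. c j * Z j w)"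
        by simp
    qed
  qed
  then show ?thesis using fT unfolding e1 e2 by (auto simp: T_def)
qed


lemma inner_FTC:
  fixes a c :: real assumes a: "0 \<le> a" and c: "0 < c"
  shows "(\<integral>\<^sup>+x. ennreal (x * exp (- (x^2 * c))) * indicator {a<..} (x^2 * c) * indicator {0<..} x \<partial>lborel)
       = ennreal (exp (- a) / (2 * c))"
proof -
  define b where "b = sqrt (a / c)"
  have b0: "0 \<le> b" using a c by (simp add: b_def)
  have bb: "b^2 * c = a" using a c by (simp add: b_def)
  have key: "0 < x \<Longrightarrow> (a < x^2 * c) = (b < x)" for x
  proof -
    assume x: "0 < x"
    have "(a < x^2 * c) = (a / c < x^2)" using c by (simp add: field_simps)
    also have "\<dots> = (sqrt (a/c) < sqrt (x^2))" by (simp only: real_sqrt_less_iff)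
    also have "sqrt (x^2) = x" using x by simp
    finally show ?thesis by (simp add: b_def)
  qed
  have "(\<integral>\<^sup>+x. ennreal (x * exp (- (x^2 * c))) * indicator {a<..} (x^2 * c) * indicator {0<..} x \<partial>lborel)
      = (\<integral>\<^sup>+x. ennreal (x * exp (- (x^2 * c))) * indicator {b..} x \<partial>lborel)"
  proof (rule nn_integral_cong_AE)
    have "AE x in lborel. x \<notin> {0, b}" by (rule AE_I[where N="{0,b}"]) (auto simp: emeasure_lborel_countable)
    then show "AE x in lborel. ennreal (x * exp (- (x^2 * c))) * indicator {a<..} (x^2 * c) * indicator {0<..} x
        = ennreal (x * exp (- (x^2 * c))) * indicator {b..} x"
    proof (rule AE_mp, intro AE_I2 impI)
      fix x :: real assume "x \<notin> {0, b}"
      then have x0: "x \<noteq> 0" and xb: "x \<noteq> b" by auto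
      show "ennreal (x * exp (- (x^2 * c))) * indicator {a<..} (x^2 * c) * indicator {0<..} x
        = ennreal (x * exp (- (x^2 * c))) * indicator {b..} x"
      proof (cases "0 < x")
        case True
        then show ?thesis using key[OF True] xb by (auto split: split_indicator)
      next
        case False
        then have "x < 0" using x0 by simp
        then have "\<not> b \<le> x" using b0 by simp
        then show ?thesis using False by (auto split: split_indicator)
      qed
    qed
  qed
  also have "\<dots> = ennreal (0 - (- exp (- (b^2 * c)) / (2 * c)))"
  proof (rule nn_integral_FTC_atLeast)
    show "(\<lambda>x. x * exp (- (x^2 * c))) \<in> borel_measurable borel" by measurable
    fix x :: real assume "b \<le> x"
    then show "0 \<le> x * exp (- (x^2 * c))" using b0 by simp
    show "((\<lambda>x. - exp (- (x^2 * c)) / (2 * c)) has_real_derivative x * exp (- (x^2 * c))) (at x)"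
      using c by (auto intro!: derivative_eq_intros simp: field_simps)
  next
    have "((\<lambda>x. - (exp (- (x\<^sup>2 * c)) / (2 * c))) \<longlongrightarrow> (- (0 / (2 * c)))) at_top"
      apply (intro tendsto_intros filterlim_compose[OF exp_at_bot] filterlim_compose[OF filterlim_uminus_at_bot_at_top])
       apply (subst mult.commute)
       apply (rule filterlim_tendsto_pos_mult_at_top[OF tendsto_const c])
       apply (rule filterlim_pow_at_top[OF _ filterlim_ident])
      using c by auto
    then show "((\<lambda>x. - exp (- (x^2 * c)) / (2 * c)) \<longlongrightarrow> 0) at_top" by simp
  qed
  also have "\<dots> = ennreal (exp (- a) / (2 * c))" using bb by simp
  finally show ?thesis .
qed

lemma quad:
  fixes a :: real assumes a: "0 \<le> a"
  shows "(\<integral>\<^sup>+x. \<integral>\<^sup>+y. ennreal (exp (- (x^2 + y^2))) * indicator {a<..} (x^2 + y^2) * indicator {0<..} y * indicator {0<..} x \<partial>lborel \<partial>lborel)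
       = ennreal (pi / 4 * exp (- a))"
proof -
  let ?G = "\<lambda>x s::real. ennreal (x * exp (- (x^2 * (1 + s^2)))) * indicator {a<..} (x^2 * (1 + s^2)) * indicator {0<..} x * indicator {0<..} s"
  have "(\<integral>\<^sup>+x. \<integral>\<^sup>+y. ennreal (exp (- (x^2 + y^2))) * indicator {a<..} (x^2 + y^2) * indicator {0<..} y * indicator {0<..} x \<partial>lborel \<partial>lborel)
      = (\<integral>\<^sup>+x. \<integral>\<^sup>+s. ?G x s \<partial>lborel \<partial>lborel)"
  proof (rule nn_integral_cong)
    fix x :: real
    show "(\<integral>\<^sup>+y. ennreal (exp (- (x^2 + y^2))) * indicator {a<..} (x^2 + y^2) * indicator {0<..} y * indicator {0<..} x \<partial>lborel)
      = (\<integral>\<^sup>+s. ?G x s \<partial>lborel)"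
    proof (cases "0 < x")
      case True
      have "(\<integral>\<^sup>+y. ennreal (exp (- (x^2 + y^2))) * indicator {a<..} (x^2 + y^2) * indicator {0<..} y * indicator {0<..} x \<partial>lborel)
        = ennreal \<bar>x\<bar> * (\<integral>\<^sup>+s. ennreal (exp (- (x^2 + (0 + x * s)^2))) * indicator {a<..} (x^2 + (0 + x * s)^2) * indicator {0<..} (0 + x * s) * indicator {0<..} x \<partial>lborel)"
        using True by (intro nn_integral_real_affine) auto
      also have "\<dots> = (\<integral>\<^sup>+s. ennreal x * (ennreal (exp (- (x^2 * (1 + s^2)))) * indicator {a<..} (x^2 * (1 + s^2)) * indicator {0<..} x * indicator {0<..} s) \<partial>lborel)"
      proof -
        have "x^2 + (0 + x * s)^2 = x^2 * (1 + s^2)" for s by (simp add: power_mult_distrib algebra_simps)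
        moreover have "indicator {0<..} (0 + x * s) = (indicator {0<..} s :: ennreal)" for s
          using True by (simp add: indicator_def zero_less_mult_iff)
        ultimately show ?thesis using True
          by (subst nn_integral_cmult[symmetric]) (auto simp: mult_ac)
      qed
      also have "\<dots> = (\<integral>\<^sup>+s. ?G x s \<partial>lborel)"
        using True by (intro nn_integral_cong) (simp add: ennreal_mult mult_ac)
      finally show ?thesis .
    next
      case False
      then show ?thesis by (simp add: indicator_def)
    qed
  qed
  also have "\<dots> = (\<integral>\<^sup>+s. \<integral>\<^sup>+x. ?G x s \<partial>lborel \<partial>lborel)"
    by (rule lborel_pair.Fubini'[symmetric]) auto
  also have "\<dots> = (\<integral>\<^sup>+s. ennreal (exp (- a) / (2 * (1 + s^2))) * indicator {0<..} s \<partial>lborel)"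
  proof (rule nn_integral_cong)
    fix s :: real
    have "(\<integral>\<^sup>+x. ?G x s \<partial>lborel) = (\<integral>\<^sup>+x. ennreal (x * exp (- (x^2 * (1 + s^2)))) * indicator {a<..} (x^2 * (1 + s^2)) * indicator {0<..} x \<partial>lborel) * indicator {0<..} s"
      by (rule nn_integral_multc) auto
    also have "\<dots> = ennreal (exp (- a) / (2 * (1 + s^2))) * indicator {0<..} s"
      using a by (subst inner_FTC) (auto simp: add_pos_nonneg)
    finally show "(\<integral>\<^sup>+x. ?G x s \<partial>lborel) = ennreal (exp (- a) / (2 * (1 + s^2))) * indicator {0<..} s" .
  qed
  also have "\<dots> = (\<integral>\<^sup>+s. ennreal (exp (- a) / (2 * (1 + s^2))) * indicator {0..} s \<partial>lborel)"
    by (intro nn_integral_cong_AE AE_I[where N="{0}"]) (auto split: split_indicator)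
  also have "\<dots> = ennreal (exp (- a) * (pi / 2) / 2 - exp (- a) * arctan 0 / 2)"
  proof (rule nn_integral_FTC_atLeast)
    show "((\<lambda>s. exp (- a) * arctan s / 2) \<longlongrightarrow> exp (- a) * (pi / 2) / 2) at_top"
      by (intro tendsto_intros) (simp_all add: tendsto_arctan_at_top)
  qed (auto intro!: derivative_eq_intros simp: add_nonneg_eq_0_iff field_simps power2_eq_square)
  also have "\<dots> = ennreal (pi / 4 * exp (- a))" by simp
  finally show ?thesis .
qed

lemma nn_integral_even:
  fixes g :: "real \<Rightarrow> ennreal"
  assumes g[measurable]: "g \<in> borel_measurable borel" and ev: "\<And>x. g (- x) = g x"
  shows "(\<integral>\<^sup>+x. g x \<partial>lborel) = 2 * (\<integral>\<^sup>+x. g x * indicator {0<..} x \<partial>lborel)"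
proof -
  have "(\<integral>\<^sup>+x. g x \<partial>lborel) = (\<integral>\<^sup>+x. g x * indicator {0<..} x + g x * indicator {..<0} x \<partial>lborel)"
    by (intro nn_integral_cong_AE AE_I[where N="{0}"]) (auto split: split_indicator)
  also have "\<dots> = (\<integral>\<^sup>+x. g x * indicator {0<..} x \<partial>lborel) + (\<integral>\<^sup>+x. g x * indicator {..<0} x \<partial>lborel)"
    by (rule nn_integral_add) auto
  also have "(\<integral>\<^sup>+x. g x * indicator {..<0} x \<partial>lborel) = ennreal \<bar>-1\<bar> * (\<integral>\<^sup>+x. g (0 + -1 * x) * indicator {..<0} (0 + -1 * x) \<partial>lborel)"
    by (rule nn_integral_real_affine) auto
  also have "\<dots> = (\<integral>\<^sup>+x. g x * indicator {0<..} x \<partial>lborel)"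
    using ev by (simp add: indicator_def)
  finally show ?thesis by (simp add: mult_2)
qed

lemma ind_gt_meas[measurable]:
  "f \<in> borel_measurable M \<Longrightarrow> (\<lambda>y. indicator {a<..} (f y :: real) :: ennreal) \<in> borel_measurable M"
  by (rule measurable_compose[of f _ borel]) auto

lemma plane:
  fixes a :: real assumes a: "0 \<le> a"
  shows "(\<integral>\<^sup>+x. \<integral>\<^sup>+y. ennreal (exp (- (x^2 + y^2))) * indicator {a<..} (x^2 + y^2) \<partial>lborel \<partial>lborel)
       = ennreal (pi * exp (- a))"
proof -
  let ?h = "\<lambda>x y::real. ennreal (exp (- (x^2 + y^2))) * indicator {a<..} (x^2 + y^2)"
  have m1: "(\<lambda>y. ennreal (exp (- (x^2 + y^2))) * indicator {a<..} (x^2 + y^2::real)) \<in> borel_measurable borel" for x :: real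
    by measurable
  have m2: "(\<lambda>x. 2 * \<integral>\<^sup>+y. ennreal (exp (- (x^2 + y^2))) * indicator {a<..} (x^2 + y^2::real) * indicator {0<..} (y::real) \<partial>lborel) \<in> borel_measurable borel"
    by measurable
  have "(\<integral>\<^sup>+x. \<integral>\<^sup>+y. ?h x y \<partial>lborel \<partial>lborel) = (\<integral>\<^sup>+x. 2 * (\<integral>\<^sup>+y. ?h x y * indicator {0<..} y \<partial>lborel) \<partial>lborel)"
  proof (rule nn_integral_cong)
    fix x :: real
    show "(\<integral>\<^sup>+y. ?h x y \<partial>lborel) = 2 * (\<integral>\<^sup>+y. ?h x y * indicator {0<..} y \<partial>lborel)"
      by (rule nn_integral_even[OF m1]) (simp add: power2_eq_square)
  qed
  also have "\<dots> = 2 * (\<integral>\<^sup>+x. 2 * (\<integral>\<^sup>+y. ?h x y * indicator {0<..} y \<partial>lborel) * indicator {0<..} x \<partial>lborel)"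
    by (rule nn_integral_even[OF m2]) (simp add: power2_eq_square)
  also have "\<dots> = 2 * (\<integral>\<^sup>+x. 2 * (\<integral>\<^sup>+y. ?h x y * indicator {0<..} y * indicator {0<..} x \<partial>lborel) \<partial>lborel)"
  proof -
    have "2 * (\<integral>\<^sup>+y. ?h x y * indicator {0<..} y \<partial>lborel) * indicator {0<..} x
        = 2 * (\<integral>\<^sup>+y. ?h x y * indicator {0<..} y * indicator {0<..} x \<partial>lborel)" for x
    proof -
      have "(\<integral>\<^sup>+y. ?h x y * indicator {0<..} y * indicator {0<..} x \<partial>lborel) = (\<integral>\<^sup>+y. ?h x y * indicator {0<..} y \<partial>lborel) * indicator {0<..} x"
        by (rule nn_integral_multc) measurable
      then show ?thesis by (simp only: mult.assoc)
    qed
    then show ?thesis by (simp only:)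
  qed
  also have "\<dots> = 4 * (\<integral>\<^sup>+x. (\<integral>\<^sup>+y. ?h x y * indicator {0<..} y * indicator {0<..} x \<partial>lborel) \<partial>lborel)"
  proof -
    have "(\<integral>\<^sup>+x. 2 * (\<integral>\<^sup>+y. ?h x y * indicator {0<..} y * indicator {0<..} x \<partial>lborel) \<partial>lborel)
      = 2 * (\<integral>\<^sup>+x. (\<integral>\<^sup>+y. ?h x y * indicator {0<..} y * indicator {0<..} x \<partial>lborel) \<partial>lborel)"
      by (rule nn_integral_cmult) measurable
    then show ?thesis by (simp add: mult.assoc[symmetric])
  qed
  also have "\<dots> = 4 * ennreal (pi / 4 * exp (- a))"
    using quad[OF a] by (simp only:)
  also have "\<dots> = ennreal (pi * exp (- a))"
    by (simp add: ennreal_mult'[symmetric] ennreal_numeral[symmetric] del: ennreal_numeral)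
  finally show ?thesis .
qed


lemma nd_half: "normal_density 0 (1 / sqrt 2) x = exp (- (x^2)) / sqrt pi"
proof -
  have h: "(1 / sqrt 2)^2 = (1/2::real)" by (simp add: power_divide)
  show ?thesis unfolding normal_density_def h by simp
qed

lemma (in prob_space) chi2:
  assumes V: "cgauss (1 / sqrt 2) V"
  shows "distributed M lborel (\<lambda>w. (cmod (V w))^2) (exponential_density 1)"
proof -
  have mV[measurable]: "V \<in> borel_measurable M" by (rule cgauss_measurable[OF V])
  have mX: "(\<lambda>w. (cmod (V w))^2) \<in> borel_measurable M" by measurable
  have key: "emeasure M {x \<in> space M. (cmod (V x))^2 \<le> a} = 1 - ennreal (exp (- a * 1))" if a: "0 \<le> a" for a :: real
  proof -
  let ?N = "Nm (1 / sqrt 2)"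
  interpret N: prob_space ?N by (rule prob_space_Nm) simp
  have DP: "distr M borel (\<lambda>w. Re (V w)) = ?N" and DQ: "distr M borel (\<lambda>w. Im (V w)) = ?N"
    using V unfolding cgauss_def by (auto simp: distributed_normal_iff)
  have J: "distr M (borel \<Otimes>\<^sub>M borel) (\<lambda>w. (Re (V w), Im (V w))) = ?N \<Otimes>\<^sub>M ?N"
    using V unfolding cgauss_def indep_var_distribution_eq DP DQ by simp
  define S where "S = {p::real\<times>real. a < fst p ^ 2 + snd p ^ 2}"
  have S[measurable]: "S \<in> sets (borel \<Otimes>\<^sub>M borel)"
  proof -
    have "S = (\<lambda>p. fst p ^ 2 + snd p ^ 2) -` {a<..} \<inter> space (borel \<Otimes>\<^sub>M borel)"
      by (auto simp: S_def space_pair_measure)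
    also have "\<dots> \<in> sets (borel \<Otimes>\<^sub>M borel)"
    proof -
      have "(\<lambda>p::real\<times>real. fst p ^ 2 + snd p ^ 2) \<in> borel_measurable (borel \<Otimes>\<^sub>M borel)" by measurable
      from measurable_sets[OF this, of "{a<..}"] show ?thesis by simp
    qed
    finally show ?thesis .
  qed
  have "emeasure M {w \<in> space M. a < (cmod (V w))^2} = emeasure M ((\<lambda>w. (Re (V w), Im (V w))) -` S \<inter> space M)"
    by (rule arg_cong[where f="emeasure M"]) (auto simp: S_def cmod_power2)
  also have "\<dots> = emeasure (distr M (borel \<Otimes>\<^sub>M borel) (\<lambda>w. (Re (V w), Im (V w)))) S"
    by (rule emeasure_distr[symmetric]) auto
  also have "\<dots> = emeasure (?N \<Otimes>\<^sub>M ?N) S" using J by simp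
  also have "\<dots> = \<integral>\<^sup>+x. emeasure ?N (Pair x -` S) \<partial>?N"
    by (rule N.emeasure_pair_measure_alt) simp
  also have "\<dots> = \<integral>\<^sup>+x. ennreal (1 / pi) * (\<integral>\<^sup>+y. ennreal (exp (- (x^2 + y^2))) * indicator {a<..} (x^2 + y^2) \<partial>lborel) \<partial>lborel"
  proof -
    have "emeasure ?N (Pair x -` S) = (\<integral>\<^sup>+y. ennreal (exp (- (y^2)) / sqrt pi) * indicator {a<..} (x^2 + y^2) \<partial>lborel)" for x
    proof -
      have "Pair x -` S \<in> sets borel" using sets_Pair1[OF S] by simp
      then have "emeasure ?N (Pair x -` S) = (\<integral>\<^sup>+y. ennreal (normal_density 0 (1 / sqrt 2) y) * indicator (Pair x -` S) y \<partial>lborel)"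
        unfolding Nm_def by (simp add: emeasure_density)
      also have "\<dots> = (\<integral>\<^sup>+y. ennreal (exp (- (y^2)) / sqrt pi) * indicator {a<..} (x^2 + y^2) \<partial>lborel)"
        by (intro nn_integral_cong) (auto simp: nd_half S_def indicator_def)
      finally show ?thesis .
    qed
    then have "(\<integral>\<^sup>+x. emeasure ?N (Pair x -` S) \<partial>?N) = (\<integral>\<^sup>+x. ennreal (exp (- (x^2)) / sqrt pi) * (\<integral>\<^sup>+y. ennreal (exp (- (y^2)) / sqrt pi) * indicator {a<..} (x^2 + y^2) \<partial>lborel) \<partial>lborel)"
      unfolding Nm_def by (subst nn_integral_density) (auto simp: nd_half)
    also have "\<dots> = \<integral>\<^sup>+x. ennreal (1 / pi) * (\<integral>\<^sup>+y. ennreal (exp (- (x^2 + y^2))) * indicator {a<..} (x^2 + y^2) \<partial>lborel) \<partial>lborel"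
    proof (rule nn_integral_cong)
      fix x :: real
      have "ennreal (exp (- (x^2)) / sqrt pi) * (\<integral>\<^sup>+y. ennreal (exp (- (y^2)) / sqrt pi) * indicator {a<..} (x^2 + y^2) \<partial>lborel)
          = (\<integral>\<^sup>+y. ennreal (exp (- (x^2)) / sqrt pi) * (ennreal (exp (- (y^2)) / sqrt pi) * indicator {a<..} (x^2 + y^2)) \<partial>lborel)"
        by (rule nn_integral_cmult[symmetric]) measurable
      also have "\<dots> = (\<integral>\<^sup>+y. ennreal (1 / pi) * (ennreal (exp (- (x^2 + y^2))) * indicator {a<..} (x^2 + y^2)) \<partial>lborel)"
      proof (rule nn_integral_cong)
        fix y :: real
        have "exp (- (x^2)) / sqrt pi * (exp (- (y^2)) / sqrt pi) = 1 / pi * exp (- (x^2 + y^2))"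
          by (simp add: mult_exp_exp field_simps)
        then show "ennreal (exp (- (x^2)) / sqrt pi) * (ennreal (exp (- (y^2)) / sqrt pi) * indicator {a<..} (x^2 + y^2))
          = ennreal (1 / pi) * (ennreal (exp (- (x^2 + y^2))) * indicator {a<..} (x^2 + y^2))"
          by (simp add: ennreal_mult[symmetric] mult.assoc[symmetric])
      qed
      also have "\<dots> = ennreal (1 / pi) * (\<integral>\<^sup>+y. ennreal (exp (- (x^2 + y^2))) * indicator {a<..} (x^2 + y^2) \<partial>lborel)"
        by (rule nn_integral_cmult) measurable
      finally show "ennreal (exp (- (x^2)) / sqrt pi) * (\<integral>\<^sup>+y. ennreal (exp (- (y^2)) / sqrt pi) * indicator {a<..} (x^2 + y^2) \<partial>lborel)
          = ennreal (1 / pi) * (\<integral>\<^sup>+y. ennreal (exp (- (x^2 + y^2))) * indicator {a<..} (x^2 + y^2) \<partial>lborel)" .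
    qed
    finally show ?thesis .
  qed
  also have "\<dots> = ennreal (1 / pi) * (\<integral>\<^sup>+x. (\<integral>\<^sup>+y. ennreal (exp (- (x^2 + y^2))) * indicator {a<..} (x^2 + y^2) \<partial>lborel) \<partial>lborel)"
    by (rule nn_integral_cmult) measurable
  also have "\<dots> = ennreal (1 / pi) * ennreal (pi * exp (- a))" by (simp only: plane[OF a])
  also have "\<dots> = ennreal (exp (- a))" by (simp add: ennreal_mult[symmetric])
  finally have gt: "emeasure M {w \<in> space M. a < (cmod (V w))^2} = ennreal (exp (- a))" .
  have "prob {w \<in> space M. (cmod (V w))^2 \<le> a} = 1 - prob {w \<in> space M. a < (cmod (V w))^2}"
  proof -
    have "{w \<in> space M. (cmod (V w))^2 \<le> a} = space M - {w \<in> space M. a < (cmod (V w))^2}" by auto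
    then show ?thesis by (simp add: prob_compl)
  qed
  also have "prob {w \<in> space M. a < (cmod (V w))^2} = exp (- a)" using gt by (simp add: emeasure_eq_measure)
  finally have pr: "prob {w \<in> space M. (cmod (V w))^2 \<le> a} = 1 - exp (- a)" .
  show ?thesis
    using pr by (simp add: emeasure_eq_measure ennreal_minus ennreal_1[symmetric] del: ennreal_1)
  qed
  show ?thesis by (rule exponential_distributedI[OF mX _ key]) auto
qed


locale mimo = prob_space M for M :: "'a measure" +
  fixes Nt Nr k :: nat and h :: "'a \<Rightarrow> nat \<Rightarrow> nat \<Rightarrow> complex"
  assumes Nt: "2 \<le> Nt" and Nr: "1 \<le> Nr" and k: "k < Nt"
    and iid: "iid_CN01_entries M Nt Nr h"
begin

definition "I = {..<Nt} \<times> {..<Nr} \<times> (UNIV :: bool set)"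
definition "X = (\<lambda>(j, i, b) w. if b then Re (h w j i) else Im (h w j i))"
definition "J = {..<Nt} - {k}"

lemma X_indep: "indep_vars (\<lambda>_. borel) X I"
  using iid unfolding iid_CN01_entries_def I_def X_def by simp

lemma X_simps[simp]: "X (j, i, True) w = Re (h w j i)" "X (j, i, False) w = Im (h w j i)"
  by (simp_all add: X_def)

lemma dist_h: "j < Nt \<Longrightarrow> i < Nr \<Longrightarrow> distributed M lborel (\<lambda>w. Re (h w j i)) (normal_density 0 (1 / sqrt 2))
  \<and> distributed M lborel (\<lambda>w. Im (h w j i)) (normal_density 0 (1 / sqrt 2))"
  using iid unfolding iid_CN01_entries_def by simp

lemma block:
  assumes "\<And>l. l \<in> L \<Longrightarrow> K l \<subseteq> I" "disjoint_family_on K L"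
    "\<And>l. l \<in> L \<Longrightarrow> Y l \<in> measurable (PiM (K l) (\<lambda>_. borel)) (N l)"
  shows "indep_vars N (\<lambda>l w. Y l (restrict (\<lambda>p. X p w) (K l))) L"
  using indep_vars_compose2[OF indep_vars_restrict[OF X_indep assms(1,2)] assms(3)] by simp

lemma cg: assumes j: "j < Nt" and i: "i < Nr" shows "cgauss (1 / sqrt 2) (\<lambda>w. h w j i)"
proof -
  have "indep_var (PiM {(j,i,True)} (\<lambda>_. borel)) (\<lambda>\<omega>. restrict (\<lambda>p. X p \<omega>) {(j,i,True)})
                  (PiM {(j,i,False)} (\<lambda>_. borel)) (\<lambda>\<omega>. restrict (\<lambda>p. X p \<omega>) {(j,i,False)})"
    using j i by (intro indep_var_restrict[OF X_indep]) (auto simp: I_def)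
  then have "indep_var borel ((\<lambda>f. f (j,i,True)) \<circ> (\<lambda>\<omega>. restrict (\<lambda>p. X p \<omega>) {(j,i,True)}))
                  borel ((\<lambda>f. f (j,i,False)) \<circ> (\<lambda>\<omega>. restrict (\<lambda>p. X p \<omega>) {(j,i,False)}))"
    by (rule indep_var_compose) auto
  then have "indep_var borel (\<lambda>w. Re (h w j i)) borel (\<lambda>w. Im (h w j i))"
    by (simp add: o_def)
  then show ?thesis using dist_h[OF j i] unfolding cgauss_def by simp
qed

lemma row_indep: assumes j: "j < Nt" shows "indep_vars (\<lambda>_. borel) (\<lambda>i w. h w j i) {..<Nr}"
proof -
  have "indep_vars (\<lambda>_. borel) (\<lambda>i w. (\<lambda>f. Complex (f (j,i,True)) (f (j,i,False))) (restrict (\<lambda>p. X p w) {(j,i,True),(j,i,False)})) {..<Nr}"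
  proof (rule block)
    show "\<And>l. l \<in> {..<Nr} \<Longrightarrow> {(j, l, True), (j, l, False)} \<subseteq> I" using j by (auto simp: I_def)
    show "disjoint_family_on (\<lambda>i. {(j, i, True), (j, i, False)}) {..<Nr}"
      by (auto simp: disjoint_family_on_def)
    show "\<And>l. l \<in> {..<Nr} \<Longrightarrow> (\<lambda>f. Complex (f (j, l, True)) (f (j, l, False))) \<in> Pi\<^sub>M {(j, l, True), (j, l, False)} (\<lambda>_. borel) \<rightarrow>\<^sub>M borel"
      by measurable
  qed
  then show ?thesis by (rule indep_vars_cong[THEN iffD1, rotated -1]) (auto simp: fun_eq_iff complex_eq_iff)
qed

lemma lincomb_exp:
  assumes j: "j < Nt" and c: "(\<Sum>i<Nr. (cmod (c i))^2) = 1"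
  shows "distributed M lborel (\<lambda>w. (cmod (\<Sum>i<Nr. c i * h w j i))^2) (exponential_density 1)"
proof -
  have nz: "\<exists>i\<in>{..<Nr}. c i \<noteq> 0"
  proof (rule ccontr)
    assume "\<not> ?thesis" then have "(\<Sum>i<Nr. (cmod (c i))^2) = 0" by simp
    with c show False by simp
  qed
  have "cgauss (1 / sqrt 2 * sqrt (\<Sum>i<Nr. (cmod (c i))^2)) (\<lambda>w. \<Sum>i<Nr. c i * h w j i)"
    using row_indep[OF j] cg[OF j] nz by (intro cgauss_lincomb) auto
  then have "cgauss (1 / sqrt 2) (\<lambda>w. \<Sum>i<Nr. c i * h w j i)" using c by simp
  then show ?thesis by (rule chi2)
qed

lemma card_J: "card J = Nt - 1" using k by (simp add: J_def)

lemma T_erlang: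
  assumes c: "(\<Sum>i<Nr. (cmod (c i))^2) = 1"
  shows "distributed M lborel (\<lambda>w. \<Sum>j\<in>J. (cmod (\<Sum>i<Nr. c i * h w j i))^2) (erlang_density (Nt - 2) 1)"
proof -
  have ind: "indep_vars (\<lambda>_. borel) (\<lambda>j w. (\<lambda>f. (cmod (\<Sum>i<Nr. c i * Complex (f (j,i,True)) (f (j,i,False))))^2) (restrict (\<lambda>p. X p w) ({j} \<times> {..<Nr} \<times> UNIV))) J"
  proof (rule block)
    show "\<And>l. l \<in> J \<Longrightarrow> {l} \<times> {..<Nr} \<times> UNIV \<subseteq> I" by (auto simp: I_def J_def)
    show "disjoint_family_on (\<lambda>j. {j} \<times> {..<Nr} \<times> (UNIV::bool set)) J"
      by (auto simp: disjoint_family_on_def)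
    fix l assume "l \<in> J"
    show "(\<lambda>f. (cmod (\<Sum>i<Nr. c i * Complex (f (l,i,True)) (f (l,i,False))))^2) \<in> Pi\<^sub>M ({l} \<times> {..<Nr} \<times> UNIV) (\<lambda>_. borel) \<rightarrow>\<^sub>M borel"
      by measurable
  qed
  have eq: "(\<lambda>f. (cmod (\<Sum>i<Nr. c i * Complex (f (j,i,True)) (f (j,i,False))))^2) (restrict (\<lambda>p. X p w) ({j} \<times> {..<Nr} \<times> UNIV))
     = (cmod (\<Sum>i<Nr. c i * h w j i))^2" for j w
  proof -
    have "(\<Sum>i<Nr. c i * Complex (restrict (\<lambda>p. X p w) ({j} \<times> {..<Nr} \<times> UNIV) (j,i,True)) (restrict (\<lambda>p. X p w) ({j} \<times> {..<Nr} \<times> UNIV) (j,i,False)))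
      = (\<Sum>i<Nr. c i * h w j i)" by (rule sum.cong) (auto simp: complex_eq_iff)
    then show ?thesis by simp
  qed
  have ind2: "indep_vars (\<lambda>_. borel) (\<lambda>j w. (cmod (\<Sum>i<Nr. c i * h w j i))^2) J"
    using ind unfolding eq .
  have "distributed M lborel (\<lambda>w. \<Sum>j\<in>J. (cmod (\<Sum>i<Nr. c i * h w j i))^2) (erlang_density (card J - 1) 1)"
  proof (rule exponential_distributed_sum)
    show "finite J" by (simp add: J_def)
    show "J \<noteq> {}" using card_J Nt by auto
    show "\<And>j. j \<in> J \<Longrightarrow> distributed M lborel (\<lambda>w. (cmod (\<Sum>i<Nr. c i * h w j i))^2) (exponential_density 1)"
      using c by (intro lincomb_exp) (auto simp: J_def)
  qed (auto simp: ind2)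
  then show ?thesis using card_J by (simp add: numeral_2_eq_2)
qed

lemma G_erlang:
  shows "distributed M lborel (\<lambda>w. vec_norm_sq Nr (h w k)) (erlang_density (Nr - 1) 1)"
proof -
  have ind: "indep_vars (\<lambda>_. borel) (\<lambda>i w. (\<lambda>z. (cmod z)^2) (h w k i)) {..<Nr}"
    by (rule indep_vars_compose2[OF row_indep[OF k]]) auto
  have "distributed M lborel (\<lambda>w. \<Sum>i\<in>{..<Nr}. (cmod (h w k i))^2) (erlang_density (card {..<Nr} - 1) 1)"
  proof (rule exponential_distributed_sum)
    show "{..<Nr} \<noteq> {}" using Nr by (simp add: lessThan_empty_iff)
    show "\<And>i. i \<in> {..<Nr} \<Longrightarrow> distributed M lborel (\<lambda>w. (cmod (h w k i))^2) (exponential_density 1)"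
      using k by (auto intro!: chi2 cg)
  qed (use ind in auto)
  then show ?thesis by (simp add: vec_norm_sq_def)
qed

end


lemma borel_measurable_cnj'[measurable (raw)]:
  "f \<in> borel_measurable M \<Longrightarrow> (\<lambda>x. cnj (f x)) \<in> borel_measurable M"
  unfolding borel_measurable_complex_iff[of "\<lambda>x. cnj (f x)"] by (simp add: borel_measurable_complex_iff)

definition hv :: "(nat \<times> nat \<times> bool \<Rightarrow> real) \<Rightarrow> nat \<Rightarrow> nat \<Rightarrow> complex" where
  "hv f j i = Complex (f (j,i,True)) (f (j,i,False))"

context mimo
begin

definition "KA = {k} \<times> {..<Nr} \<times> (UNIV :: bool set)"
definition "KB = J \<times> {..<Nr} \<times> (UNIV :: bool set)"
definition "MA = PiM KA (\<lambda>_. (borel :: real measure))"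
definition "MB = PiM KB (\<lambda>_. (borel :: real measure))"
definition "Aw w = restrict (\<lambda>p. X p w) KA"
definition "Bw w = restrict (\<lambda>p. X p w) KB"
definition "Gf a = vec_norm_sq Nr (hv a k)"
definition "Tf a b = (\<Sum>j\<in>J. (cmod (herm_inner Nr (hv a k) (hv b j)))^2 / Gf a)"
definition "Ev \<rho> x = {p \<in> space (MA \<Otimes>\<^sub>M MB). Gf (fst p) \<le> x * (1 + \<rho> / real Nt * Tf (fst p) (snd p))}"

lemma hv_A: "i < Nr \<Longrightarrow> hv (Aw w) k i = h w k i"
  by (simp add: hv_def Aw_def KA_def complex_eq_iff)

lemma hv_B: "j \<in> J \<Longrightarrow> i < Nr \<Longrightarrow> hv (Bw w) j i = h w j i"
  by (simp add: hv_def Bw_def KB_def complex_eq_iff)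

lemma Gf_A: "Gf (Aw w) = vec_norm_sq Nr (h w k)"
  unfolding Gf_def vec_norm_sq_def by (rule sum.cong) (auto simp: hv_A)

lemma inner_AB: "j \<in> J \<Longrightarrow> herm_inner Nr (hv (Aw w) k) (hv (Bw w) j) = herm_inner Nr (h w k) (h w j)"
  unfolding herm_inner_def by (rule sum.cong) (auto simp: hv_A hv_B)

lemma Gf_nonneg: "0 \<le> Gf a" unfolding Gf_def vec_norm_sq_def by (auto intro: sum_nonneg)
lemma Tf_nonneg: "0 \<le> Tf a b" unfolding Tf_def using Gf_nonneg by (auto intro!: sum_nonneg)

lemma Aw_meas[measurable]: "Aw \<in> measurable M MA"
  unfolding Aw_def MA_def using X_indep unfolding indep_vars_def KA_def I_def
  by (intro measurable_restrict) (auto simp: k)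

lemma Bw_meas[measurable]: "Bw \<in> measurable M MB"
  unfolding Bw_def MB_def using X_indep unfolding indep_vars_def KB_def I_def J_def
  by (intro measurable_restrict) auto

lemma hvA_meas: "i < Nr \<Longrightarrow> (\<lambda>a. hv a k i) \<in> borel_measurable MA"
  unfolding hv_def MA_def KA_def by measurable

lemma hvB_meas: "j \<in> J \<Longrightarrow> i < Nr \<Longrightarrow> (\<lambda>b. hv b j i) \<in> borel_measurable MB"
  unfolding hv_def MB_def KB_def by measurable

lemma Gf_meas[measurable]: "Gf \<in> borel_measurable MA"
proof -
  have "(\<lambda>a. \<Sum>i<Nr. (cmod (hv a k i))^2) \<in> borel_measurable MA"
  proof (rule borel_measurable_sum)
    fix i assume "i \<in> {..<Nr}"
    then have [measurable]: "(\<lambda>a. hv a k i) \<in> borel_measurable MA" by (intro hvA_meas) auto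
    show "(\<lambda>a. (cmod (hv a k i))^2) \<in> borel_measurable MA" by measurable
  qed
  then show ?thesis unfolding Gf_def vec_norm_sq_def by (simp add: fun_eq_iff[symmetric])
qed

lemma inner_meas: "j \<in> J \<Longrightarrow> (\<lambda>p. herm_inner Nr (hv (fst p) k) (hv (snd p) j)) \<in> borel_measurable (MA \<Otimes>\<^sub>M MB)"
  unfolding herm_inner_def
proof (rule borel_measurable_sum)
  fix i assume j: "j \<in> J" and "i \<in> {..<Nr}"
  then have a[measurable]: "(\<lambda>a. hv a k i) \<in> borel_measurable MA" and b[measurable]: "(\<lambda>b. hv b j i) \<in> borel_measurable MB"
    by (auto intro: hvA_meas hvB_meas)
  have [measurable]: "(\<lambda>p. hv (fst p) k i) \<in> borel_measurable (MA \<Otimes>\<^sub>M MB)"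
    by (rule measurable_compose[OF measurable_fst a])
  have [measurable]: "(\<lambda>p. hv (snd p) j i) \<in> borel_measurable (MA \<Otimes>\<^sub>M MB)"
    by (rule measurable_compose[OF measurable_snd b])
  show "(\<lambda>p. cnj (hv (fst p) k i) * hv (snd p) j i) \<in> borel_measurable (MA \<Otimes>\<^sub>M MB)" by measurable
qed

lemma Tf_meas[measurable]: "(\<lambda>p. Tf (fst p) (snd p)) \<in> borel_measurable (MA \<Otimes>\<^sub>M MB)"
  unfolding Tf_def
proof (rule borel_measurable_sum)
  fix j assume "j \<in> J"
  then have [measurable]: "(\<lambda>p. herm_inner Nr (hv (fst p) k) (hv (snd p) j)) \<in> borel_measurable (MA \<Otimes>\<^sub>M MB)"
    by (rule inner_meas)
  show "(\<lambda>p. (cmod (herm_inner Nr (hv (fst p) k) (hv (snd p) j)))^2 / Gf (fst p)) \<in> borel_measurable (MA \<Otimes>\<^sub>M MB)"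
    by measurable
qed

lemma Ev_sets: "Ev \<rho> x \<in> sets (MA \<Otimes>\<^sub>M MB)"
  unfolding Ev_def by measurable

lemma event_eq:
  assumes rho: "0 < \<rho>"
  shows "{w \<in> space M. X_MRC Nt Nr \<rho> k (h w) \<le> x} = (\<lambda>w. (Aw w, Bw w)) -` Ev \<rho> x \<inter> space M"
proof -
  have "X_MRC Nt Nr \<rho> k (h w) \<le> x \<longleftrightarrow> Gf (Aw w) \<le> x * (1 + \<rho> / real Nt * Tf (Aw w) (Bw w))" for w
  proof -
    have T: "Tf (Aw w) (Bw w) = (\<Sum>j\<in>{..<Nt} - {k}. (cmod (herm_inner Nr (h w k) (h w j)))^2 / Gf (Aw w))"
      unfolding Tf_def J_def by (rule sum.cong) (auto simp: inner_AB[unfolded J_def])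
    have pos: "0 < 1 + \<rho> / real Nt * Tf (Aw w) (Bw w)"
      using rho Tf_nonneg[of "Aw w" "Bw w"] Nt by (intro add_pos_nonneg) auto
    show ?thesis unfolding X_MRC_def Gf_A[symmetric] T[symmetric]
      using pos by (simp add: pos_divide_le_eq mult.commute)
  qed
  moreover have "w \<in> space M \<Longrightarrow> (Aw w, Bw w) \<in> space (MA \<Otimes>\<^sub>M MB)" for w
    using measurable_space[OF Aw_meas] measurable_space[OF Bw_meas] by (auto simp: space_pair_measure)
  ultimately show ?thesis unfolding Ev_def by auto
qed

end

context mimo
begin

definition "psi \<rho> x g = (\<integral>\<^sup>+t. (if g \<le> x * (1 + \<rho> / real Nt * t) then ennreal (erlang_density (Nt - 2) 1 t) else 0) \<partial>lborel)"

lemma psi_meas[measurable]: "psi \<rho> x \<in> borel_measurable borel"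
  unfolding psi_def by measurable

lemma psi_emeasure:
  "emeasure (density lborel (erlang_density (Nt - 2) 1)) {t. g \<le> x * (1 + \<rho> / real Nt * t)} = psi \<rho> x g"
proof -
  have [measurable]: "{t. g \<le> x * (1 + \<rho> / real Nt * t)} \<in> sets borel" by measurable
  show ?thesis unfolding psi_def
    by (subst emeasure_density) (auto intro!: nn_integral_cong simp: indicator_def)
qed

lemma psi_0:
  assumes rho: "0 < \<rho>" and x: "0 \<le> x" shows "psi \<rho> x 0 = 1"
proof -
  have "psi \<rho> x 0 = (\<integral>\<^sup>+t. ennreal (erlang_density (Nt - 2) 1 t * t ^ 0) \<partial>lborel)"
    unfolding psi_def
  proof (rule nn_integral_cong)
    fix t :: real
    show "(if 0 \<le> x * (1 + \<rho> / real Nt * t) then ennreal (erlang_density (Nt - 2) 1 t) else 0) = ennreal (erlang_density (Nt - 2) 1 t * t ^ 0)"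
    proof (cases "t < 0")
      case True then show ?thesis by (simp add: erlang_density_def)
    next
      case False
      then have "0 \<le> x * (1 + \<rho> / real Nt * t)" using rho x by (intro mult_nonneg_nonneg add_nonneg_nonneg) auto
      then show ?thesis by simp
    qed
  qed
  also have "\<dots> = 1" by (subst nn_integral_erlang_ith_moment) auto
  finally show ?thesis .
qed

lemma indep_AB: "indep_var MA Aw MB Bw"
  unfolding MA_def MB_def Aw_def Bw_def
  by (rule indep_var_restrict[OF X_indep]) (auto simp: KA_def KB_def I_def J_def k)

lemma cond_prob:
  assumes rho: "0 < \<rho>" and x: "0 \<le> x" and a: "a \<in> space MA"
  shows "emeasure (distr M MB Bw) (Pair a -` Ev \<rho> x) = psi \<rho> x (Gf a)"
proof -
  have S: "Pair a -` Ev \<rho> x \<in> sets MB" using sets_Pair1[OF Ev_sets] .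
  have "emeasure (distr M MB Bw) (Pair a -` Ev \<rho> x) = emeasure M (Bw -` (Pair a -` Ev \<rho> x) \<inter> space M)"
    using S by (rule emeasure_distr[OF Bw_meas])
  also have "Bw -` (Pair a -` Ev \<rho> x) \<inter> space M = {w \<in> space M. Gf a \<le> x * (1 + \<rho> / real Nt * Tf a (Bw w))}"
    using a measurable_space[OF Bw_meas] by (auto simp: Ev_def space_pair_measure)
  finally have e1: "emeasure (distr M MB Bw) (Pair a -` Ev \<rho> x) = emeasure M {w \<in> space M. Gf a \<le> x * (1 + \<rho> / real Nt * Tf a (Bw w))}" .
  show ?thesis
  proof (cases "Gf a = 0")
    case True
    then have "{w \<in> space M. Gf a \<le> x * (1 + \<rho> / real Nt * Tf a (Bw w))} = space M"
      using x by (auto simp: Tf_def)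
    then show ?thesis using e1 True psi_0[OF rho x] by (simp add: emeasure_space_1)
  next
    case False
    then have G: "0 < Gf a" using Gf_nonneg[of a] by simp
    define c where "c i = cnj (hv a k i) / complex_of_real (sqrt (Gf a))" for i
    have csum: "(\<Sum>i<Nr. (cmod (c i))^2) = 1"
    proof -
      have "(\<Sum>i<Nr. (cmod (c i))^2) = (\<Sum>i<Nr. (cmod (hv a k i))^2 / Gf a)"
        using G by (intro sum.cong) (auto simp: c_def norm_divide power_divide)
      also have "\<dots> = (\<Sum>i<Nr. (cmod (hv a k i))^2) / Gf a" by (simp add: sum_divide_distrib)
      also have "\<dots> = Gf a / Gf a" unfolding Gf_def vec_norm_sq_def ..
      finally show ?thesis using G by simp
    qed
    have T: "Tf a (Bw w) = (\<Sum>j\<in>J. (cmod (\<Sum>i<Nr. c i * h w j i))^2)" for w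
      unfolding Tf_def
    proof (rule sum.cong)
      fix j assume j: "j \<in> J"
      have "herm_inner Nr (hv a k) (hv (Bw w) j) = (\<Sum>i<Nr. cnj (hv a k i) * h w j i)"
        unfolding herm_inner_def using j by (intro sum.cong) (auto simp: hv_B)
      also have "\<dots> = complex_of_real (sqrt (Gf a)) * (\<Sum>i<Nr. c i * h w j i)"
        using G by (simp add: c_def sum_distrib_left)
      finally have "(cmod (herm_inner Nr (hv a k) (hv (Bw w) j)))^2 = Gf a * (cmod (\<Sum>i<Nr. c i * h w j i))^2"
        using G by (simp add: norm_mult power_mult_distrib)
      then show "(cmod (herm_inner Nr (hv a k) (hv (Bw w) j)))^2 / Gf a = (cmod (\<Sum>i<Nr. c i * h w j i))^2"
        using G by simp
    qed simp
    have D: "distributed M lborel (\<lambda>w. \<Sum>j\<in>J. (cmod (\<Sum>i<Nr. c i * h w j i))^2) (erlang_density (Nt - 2) 1)"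
      by (rule T_erlang[OF csum])
    have Sset[measurable]: "{t. Gf a \<le> x * (1 + \<rho> / real Nt * t)} \<in> sets borel" by measurable
    have "emeasure M {w \<in> space M. Gf a \<le> x * (1 + \<rho> / real Nt * Tf a (Bw w))}
        = emeasure M ((\<lambda>w. \<Sum>j\<in>J. (cmod (\<Sum>i<Nr. c i * h w j i))^2) -` {t. Gf a \<le> x * (1 + \<rho> / real Nt * t)} \<inter> space M)"
      unfolding T by (rule arg_cong[where f="emeasure M"]) auto
    also have "\<dots> = emeasure (distr M lborel (\<lambda>w. \<Sum>j\<in>J. (cmod (\<Sum>i<Nr. c i * h w j i))^2)) {t. Gf a \<le> x * (1 + \<rho> / real Nt * t)}"
      using D unfolding distributed_def by (intro emeasure_distr[symmetric]) auto
    also have "\<dots> = emeasure (density lborel (erlang_density (Nt - 2) 1)) {t. Gf a \<le> x * (1 + \<rho> / real Nt * t)}"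
      using D unfolding distributed_def by simp
    also have "\<dots> = psi \<rho> x (Gf a)" by (rule psi_emeasure)
    finally show ?thesis using e1 by simp
  qed
qed

lemma chain:
  assumes rho: "0 < \<rho>" and x: "0 \<le> x"
  shows "emeasure M {w \<in> space M. X_MRC Nt Nr \<rho> k (h w) \<le> x}
    = (\<integral>\<^sup>+t. ennreal (erlang_density (Nt - 2) 1 t) * ennreal (erlang_CDF (Nr - 1) 1 (x * (1 + \<rho> / real Nt * t))) \<partial>lborel)"
proof -
  let ?PA = "distr M MA Aw" and ?PB = "distr M MB Bw"
  interpret PB: prob_space ?PB by (rule prob_space_distr[OF Bw_meas])
  have J: "?PA \<Otimes>\<^sub>M ?PB = distr M (MA \<Otimes>\<^sub>M MB) (\<lambda>w. (Aw w, Bw w))"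
    using indep_AB unfolding indep_var_distribution_eq by simp
  have Ev: "Ev \<rho> x \<in> sets (MA \<Otimes>\<^sub>M MB)" by (rule Ev_sets)
  have "emeasure M {w \<in> space M. X_MRC Nt Nr \<rho> k (h w) \<le> x} = emeasure M ((\<lambda>w. (Aw w, Bw w)) -` Ev \<rho> x \<inter> space M)"
    using event_eq[OF rho] by simp
  also have "\<dots> = emeasure (distr M (MA \<Otimes>\<^sub>M MB) (\<lambda>w. (Aw w, Bw w))) (Ev \<rho> x)"
    by (rule emeasure_distr[symmetric]) (auto simp: Ev)
  also have "\<dots> = emeasure (?PA \<Otimes>\<^sub>M ?PB) (Ev \<rho> x)" using J by simp
  also have "\<dots> = (\<integral>\<^sup>+a. emeasure ?PB (Pair a -` Ev \<rho> x) \<partial>?PA)"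
    by (rule PB.emeasure_pair_measure_alt) (simp add: Ev)
  also have "\<dots> = (\<integral>\<^sup>+a. psi \<rho> x (Gf a) \<partial>?PA)"
    by (rule nn_integral_cong) (auto intro!: cond_prob[OF rho x])
  also have "\<dots> = (\<integral>\<^sup>+w. psi \<rho> x (Gf (Aw w)) \<partial>M)"
    by (rule nn_integral_distr) (auto intro: Aw_meas)
  also have "\<dots> = (\<integral>\<^sup>+w. psi \<rho> x (vec_norm_sq Nr (h w k)) \<partial>M)"
    by (simp add: Gf_A)
  also have "\<dots> = (\<integral>\<^sup>+g. ennreal (erlang_density (Nr - 1) 1 g) * psi \<rho> x g \<partial>lborel)"
  proof -
    have pm: "psi \<rho> x \<in> borel_measurable lborel" using psi_meas by simp
    show ?thesis by (rule distributed_nn_integral[OF G_erlang pm, symmetric])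
  qed
  also have "\<dots> = (\<integral>\<^sup>+g. \<integral>\<^sup>+t. ennreal (erlang_density (Nr - 1) 1 g) * (if g \<le> x * (1 + \<rho> / real Nt * t) then ennreal (erlang_density (Nt - 2) 1 t) else 0) \<partial>lborel \<partial>lborel)"
    unfolding psi_def by (intro nn_integral_cong nn_integral_cmult[symmetric]) measurable
  also have "\<dots> = (\<integral>\<^sup>+t. \<integral>\<^sup>+g. ennreal (erlang_density (Nr - 1) 1 g) * (if g \<le> x * (1 + \<rho> / real Nt * t) then ennreal (erlang_density (Nt - 2) 1 t) else 0) \<partial>lborel \<partial>lborel)"
    by (rule lborel_pair.Fubini'[symmetric]) measurable
  also have "\<dots> = (\<integral>\<^sup>+t. ennreal (erlang_density (Nt - 2) 1 t) * ennreal (erlang_CDF (Nr - 1) 1 (x * (1 + \<rho> / real Nt * t))) \<partial>lborel)"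
  proof (rule nn_integral_cong)
    fix t :: real
    have "(\<integral>\<^sup>+g. ennreal (erlang_density (Nr - 1) 1 g) * (if g \<le> x * (1 + \<rho> / real Nt * t) then ennreal (erlang_density (Nt - 2) 1 t) else 0) \<partial>lborel)
        = (\<integral>\<^sup>+g. ennreal (erlang_density (Nt - 2) 1 t) * (ennreal (erlang_density (Nr - 1) 1 g) * indicator {.. x * (1 + \<rho> / real Nt * t)} g) \<partial>lborel)"
      by (intro nn_integral_cong) (auto simp: indicator_def mult.commute)
    also have "\<dots> = ennreal (erlang_density (Nt - 2) 1 t) * (\<integral>\<^sup>+g. ennreal (erlang_density (Nr - 1) 1 g) * indicator {.. x * (1 + \<rho> / real Nt * t)} g \<partial>lborel)"
      by (rule nn_integral_cmult) measurable
    also have "\<dots> = ennreal (erlang_density (Nt - 2) 1 t) * ennreal (erlang_CDF (Nr - 1) 1 (x * (1 + \<rho> / real Nt * t)))"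
      by (subst nn_integral_erlang_density) auto
    finally show "(\<integral>\<^sup>+g. ennreal (erlang_density (Nr - 1) 1 g) * (if g \<le> x * (1 + \<rho> / real Nt * t) then ennreal (erlang_density (Nt - 2) 1 t) else 0) \<partial>lborel)
      = ennreal (erlang_density (Nt - 2) 1 t) * ennreal (erlang_CDF (Nr - 1) 1 (x * (1 + \<rho> / real Nt * t)))" .
  qed
  finally show ?thesis .
qed

end

lemma term_eq:
  fixes x e r D :: real
  assumes qm: "q \<le> m" and D: "0 < D"
  shows "x^m * e / fact m * (of_nat (m choose q) * r^q) * (fact (n+q) / (fact n * D^(n+q+1)))
       = e / D^(n+1) * (of_nat ((n+q) choose q) * r^q / fact (m-q) * x^m / D^q)"
proof -
  have b1: "(of_nat (m choose q) :: real) = fact m / (fact q * fact (m - q))" using qm by (rule binomial_fact)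
  have b2: "(of_nat ((n+q) choose q) :: real) = fact (n+q) / (fact q * fact (n + q - q))" by (rule binomial_fact) simp
  have p: "D^(n+q+1) = D^(n+1) * D^q" by (simp add: power_add[symmetric])
  show ?thesis unfolding b1 b2 p using D by (simp add: field_simps)
qed

lemma aux_cancel: "(C::real) \<noteq> 0 \<Longrightarrow> F \<noteq> 0 \<Longrightarrow> P \<noteq> 0 \<Longrightarrow> C / (F * P) * (P * T * E / C) = T * E / F"
  by (simp add: field_simps)

lemma mom:
  fixes s :: real assumes s: "0 \<le> s"
  shows "has_bochner_integral lborel (\<lambda>t. erlang_density n 1 t * t^q * exp (- (s * t))) (fact (n+q) / (fact n * (1+s)^(n+q+1)))"
proof -
  have l: "(0::real) < 1 + s" using s by simp
  have hb: "has_bochner_integral lborel (erlang_density (n+q) (1+s)) 1"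
  proof (rule has_bochner_integral_nn_integral)
    show "(\<integral>\<^sup>+t. ennreal (erlang_density (n+q) (1+s) t) \<partial>lborel) = ennreal 1"
      using nn_integral_erlang_ith_moment[OF l, of "n+q" 0] by simp
  qed (auto simp: l less_imp_le)
  have "has_bochner_integral lborel (\<lambda>t. (fact (n+q) / (fact n * (1+s)^(n+q+1))) * erlang_density (n+q) (1+s) t) ((fact (n+q) / (fact n * (1+s)^(n+q+1))) * 1)"
    using hb by (rule has_bochner_integral_mult_right)
  moreover have "(fact (n+q) / (fact n * (1+s)^(n+q+1))) * erlang_density (n+q) (1+s) t = erlang_density n 1 t * t^q * exp (- (s * t))" for t
  proof (cases "t < 0")
    case True then show ?thesis by (simp add: erlang_density_def)
  next
    case False
    have e: "exp (- t - s * t) = exp (- t) * exp (- (s * t))" by (simp add: mult_exp_exp)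
    have ed: "erlang_density (n+q) (1+s) t = (1+s)^(n+q+1) * t^(n+q) * exp (- ((1+s) * t)) / fact (n+q)"
      using False by (simp add: erlang_density_def algebra_simps)
    have "(fact (n+q) / (fact n * (1+s)^(n+q+1))) * erlang_density (n+q) (1+s) t = t^(n+q) * exp (- ((1+s) * t)) / fact n"
      unfolding ed by (rule aux_cancel) (use l in auto)
    also have "\<dots> = erlang_density n 1 t * t^q * exp (- (s * t))"
      using False by (simp add: erlang_density_def power_add e field_simps)
    finally show ?thesis .
  qed
  ultimately show ?thesis by simp
qed

lemma pt_term:
  fixes x r t e :: real
  shows "e * ((x * (1 + r * t))^m * exp (- (x * (1 + r * t))) / fact m)
    = (\<Sum>q\<le>m. (x^m * exp (- x) / fact m * (of_nat (m choose q) * r^q)) * (e * t^q * exp (- ((r * x) * t))))"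
proof -
  have b: "(1 + r * t)^m = (\<Sum>q\<le>m. of_nat (m choose q) * (r * t)^q)"
    using binomial_ring[of "r * t" 1 m] by (simp add: add.commute)
  have ex: "exp (- (x * (1 + r * t))) = exp (- x) * exp (- ((r * x) * t))"
    by (simp add: mult_exp_exp algebra_simps)
  have "e * ((x * (1 + r * t))^m * exp (- (x * (1 + r * t))) / fact m)
      = e * (x^m * (1 + r * t)^m * (exp (- x) * exp (- ((r * x) * t))) / fact m)"
    by (simp only: ex power_mult_distrib)
  also have "\<dots> = (x^m * exp (- x) / fact m) * e * exp (- ((r * x) * t)) * (1 + r * t)^m"
    by (simp add: field_simps)
  also have "\<dots> = (\<Sum>q\<le>m. (x^m * exp (- x) / fact m) * e * exp (- ((r * x) * t)) * (of_nat (m choose q) * (r * t)^q))"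
    unfolding b by (simp add: sum_distrib_left)
  also have "\<dots> = (\<Sum>q\<le>m. (x^m * exp (- x) / fact m * (of_nat (m choose q) * r^q)) * (e * t^q * exp (- ((r * x) * t))))"
    by (intro sum.cong) (auto simp: power_mult_distrib)
  finally show ?thesis .
qed

lemma final_int:
  fixes x r :: real assumes x: "0 \<le> x" and r: "0 \<le> r"
  shows "has_bochner_integral lborel (\<lambda>t. erlang_density n 1 t * erlang_CDF K 1 (x * (1 + r * t)))
     (1 - (\<Sum>m\<le>K. \<Sum>q\<le>m. (x^m * exp (- x) / fact m * (of_nat (m choose q) * r^q)) * (fact (n+q) / (fact n * (1 + r*x)^(n+q+1)))))"
proof -
  let ?c = "\<lambda>m q. x^m * exp (- x) / fact m * (of_nat (m choose q) * r^q)"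
  have rx: "0 \<le> r * x" using r x by simp
  have h0: "has_bochner_integral lborel (\<lambda>t. erlang_density n 1 t) 1"
    using mom[OF order_refl, of n 0] by simp
  have hs: "has_bochner_integral lborel (\<lambda>t. \<Sum>m\<le>K. \<Sum>q\<le>m. ?c m q * (erlang_density n 1 t * t^q * exp (- ((r * x) * t))))
     (\<Sum>m\<le>K. \<Sum>q\<le>m. ?c m q * (fact (n+q) / (fact n * (1 + r*x)^(n+q+1))))"
    by (intro has_bochner_integral_sum has_bochner_integral_mult_right mom[OF rx])
  have H: "has_bochner_integral lborel (\<lambda>t. erlang_density n 1 t - (\<Sum>m\<le>K. \<Sum>q\<le>m. ?c m q * (erlang_density n 1 t * t^q * exp (- ((r * x) * t)))))
     (1 - (\<Sum>m\<le>K. \<Sum>q\<le>m. ?c m q * (fact (n+q) / (fact n * (1 + r*x)^(n+q+1)))))"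
    by (rule has_bochner_integral_diff[OF h0 hs])
  have pt: "erlang_density n 1 t * erlang_CDF K 1 (x * (1 + r * t)) = erlang_density n 1 t - (\<Sum>m\<le>K. \<Sum>q\<le>m. ?c m q * (erlang_density n 1 t * t^q * exp (- ((r * x) * t))))" for t
  proof (cases "t < 0")
    case True then show ?thesis by (simp add: erlang_density_def)
  next
    case False
    then have y: "0 \<le> x * (1 + r * t)" using x r by simp
    have "erlang_density n 1 t * erlang_CDF K 1 (x * (1 + r * t))
        = erlang_density n 1 t - (\<Sum>m\<le>K. erlang_density n 1 t * ((x * (1 + r * t))^m * exp (- (x * (1 + r * t))) / fact m))"
      using y by (simp add: erlang_CDF_def right_diff_distrib sum_distrib_left)
    also have "\<dots> = erlang_density n 1 t - (\<Sum>m\<le>K. \<Sum>q\<le>m. ?c m q * (erlang_density n 1 t * t^q * exp (- ((r * x) * t))))"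
      by (simp only: pt_term)
    finally show ?thesis .
  qed
  show ?thesis using H by (simp only: pt[symmetric])
qed


context mimo
begin

lemma main:
  assumes rho: "0 < \<rho>" and x: "0 \<le> x"
  shows "measure M {w \<in> space M. X_MRC Nt Nr \<rho> k (h w) \<le> x} =
    1 - exp (- x) / (1 + \<rho> / real Nt * x) ^ (Nt - 1) *
      (\<Sum>k'<Nr. \<Sum>p\<le>k'. alpha_coef Nt \<rho> p k' * x ^ k' / (1 + \<rho> / real Nt * x) ^ p)"
proof -
  let ?r = "\<rho> / real Nt" and ?n = "Nt - 2" and ?K = "Nr - 1"
  let ?D = "1 + \<rho> / real Nt * x"
  have r: "0 \<le> ?r" using rho by simp
  have D: "0 < ?D" using rho x by (simp add: add_pos_nonneg)
  let ?g = "\<lambda>t. erlang_density ?n 1 t * erlang_CDF ?K 1 (x * (1 + ?r * t))"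
  have HB: "has_bochner_integral lborel ?g
     (1 - (\<Sum>m\<le>?K. \<Sum>q\<le>m. (x^m * exp (- x) / fact m * (of_nat (m choose q) * ?r^q)) * (fact (?n+q) / (fact ?n * (1 + ?r*x)^(?n+q+1)))))"
    by (rule final_int[OF x r])
  have "measure M {w \<in> space M. X_MRC Nt Nr \<rho> k (h w) \<le> x} = enn2real (emeasure M {w \<in> space M. X_MRC Nt Nr \<rho> k (h w) \<le> x})"
    by (simp add: measure_def)
  also have "\<dots> = enn2real (\<integral>\<^sup>+t. ennreal (erlang_density ?n 1 t) * ennreal (erlang_CDF ?K 1 (x * (1 + ?r * t))) \<partial>lborel)"
    by (simp only: chain[OF rho x])
  also have "\<dots> = (\<integral>t. ?g t \<partial>lborel)"
  proof (rule enn2real_nn_integral_eq_integral)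
    show "?g \<in> borel_measurable lborel" using borel_measurable_integrable[OF integrable.intros[OF HB]] .
  qed (auto simp: ennreal_mult'[symmetric])
  also have "\<dots> = 1 - (\<Sum>m\<le>?K. \<Sum>q\<le>m. (x^m * exp (- x) / fact m * (of_nat (m choose q) * ?r^q)) * (fact (?n+q) / (fact ?n * (1 + ?r*x)^(?n+q+1))))"
    using HB by (rule has_bochner_integral_integral_eq)
  also have "(\<Sum>m\<le>?K. \<Sum>q\<le>m. (x^m * exp (- x) / fact m * (of_nat (m choose q) * ?r^q)) * (fact (?n+q) / (fact ?n * (1 + ?r*x)^(?n+q+1))))
     = exp (- x) / ?D ^ (Nt - 1) * (\<Sum>k'<Nr. \<Sum>p\<le>k'. alpha_coef Nt \<rho> p k' * x ^ k' / ?D ^ p)"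
  proof -
    have KN: "{..?K} = {..<Nr}" using Nr by auto
    have "(\<Sum>m\<le>?K. \<Sum>q\<le>m. (x^m * exp (- x) / fact m * (of_nat (m choose q) * ?r^q)) * (fact (?n+q) / (fact ?n * (1 + ?r*x)^(?n+q+1))))
      = (\<Sum>m<Nr. \<Sum>q\<le>m. exp (- x) / ?D ^ (Nt - 1) * (alpha_coef Nt \<rho> q m * x ^ m / ?D ^ q))"
      unfolding KN
    proof (intro sum.cong refl)
      fix m q :: nat assume q: "q \<in> {..m}"
      have n1: "?n + 1 = Nt - 1" and nq: "?n + q = Nt + q - 2" using Nt by auto
      have "(x^m * exp (- x) / fact m * (of_nat (m choose q) * ?r^q)) * (fact (?n+q) / (fact ?n * ?D^(?n+q+1)))
        = exp (- x) / ?D^(?n+1) * (of_nat ((?n+q) choose q) * ?r^q / fact (m-q) * x^m / ?D^q)"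
        using q D by (intro term_eq) auto
      then show "(x^m * exp (- x) / fact m * (of_nat (m choose q) * ?r^q)) * (fact (?n+q) / (fact ?n * (1 + ?r*x)^(?n+q+1)))
        = exp (- x) / ?D ^ (Nt - 1) * (alpha_coef Nt \<rho> q m * x ^ m / ?D ^ q)"
        unfolding n1 nq alpha_coef_def by simp
    qed
    also have "\<dots> = exp (- x) / ?D ^ (Nt - 1) * (\<Sum>k'<Nr. \<Sum>p\<le>k'. alpha_coef Nt \<rho> p k' * x ^ k' / ?D ^ p)"
      by (simp add: sum_distrib_left)
    finally show ?thesis .
  qed
  finally show ?thesis .
qed

end

theorem mainTheorem1:
  fixes M :: "'a measure" and h :: "'a \<Rightarrow> nat \<Rightarrow> nat \<Rightarrow> complex"
    and Nt Nr k :: nat and \<rho> x :: real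
  assumes "prob_space M"
    and "Nt \<ge> 2" and "Nr \<ge> 1" and "\<rho> > 0"
    and "iid_CN01_entries M Nt Nr h"
    and "k < Nt"
    and "x \<ge> 0"
  shows "measure M {w \<in> space M. X_MRC Nt Nr \<rho> k (h w) \<le> x} =
    1 - exp (- x) / (1 + \<rho> / real Nt * x) ^ (Nt - 1) *
      (\<Sum>k'<Nr. \<Sum>p\<le>k'. alpha_coef Nt \<rho> p k' * x ^ k' / (1 + \<rho> / real Nt * x) ^ p)"
proof -
  have mi: "mimo M Nt Nr k h"
    unfolding mimo_def mimo_axioms_def using assms by simp
  interpret mimo M Nt Nr k h by (rule mi)
  show ?thesis by (rule main) (use assms in simp_all)
qed


end
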